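(* The following problem is decidable: given a finite alphabet $\mathcal{A}$, a finite set $\mathcal{F}$ of finite patterns on $\mathbb{Z}^d$ and $T\in\mathbb{N}$, does player $A$ have a winning strategy in the game $\Gamma_T^\omega(\mathcal{A},\mathcal{F},\mathbb{Z}^d)$?
   Context: Fix $d\ge1$; use the distance $d(i,j)=\sum_{k=1}^d|i_k-j_k|$ on $\mathbb{Z}^d$, and $d(i,S)=\min_{j\in S}d(i,j)$. A pattern is $p=(S,f)$ with $S\subseteq\mathbb{Z}^d$, $f\in\mathcal{A}^S$; a finite pattern $q=(S',g)$ appears in $p=(S,f)$ if $v+S'\subseteq S$ and $f(v+j)=g(j)$ for all $j\in S'$, for some $v\in\mathbb{Z}^d$. The game $\Gamma_T^\omega(\mathcal{A},\mathcal{F},\mathbb{Z}^d)$: positions are a finite sequence $(p^1,\dots,p^b)$ of finite patterns (boards) together with the player to move; initially the sequence is empty and $A$ moves; players $A$ and $B$ alternate. At turn number $t$ the current player may: pass; add a tile $(i,a)$ ($a\in\mathcal{A}$, $i\notin\operatorname{supp}p^k$) to one existing board $p^k$, provided $d(i,\operatorname{supp}p^k)\le 2^{T-t}$; or open a new board $p^{b+1}=\{(0,a)\}$ for some $a\in\mathcal{A}$. If a pattern of $\mathcal{F}$ appears on some board, the game ends and $A$ wins; if after turn $T$ no such pattern has appeared, $B$ wins. *)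

theory Defs
  imports Main "HOL-Library.Nat_Bijection"
begin

datatype recf = Zero | Succ | Proj nat | Comp recf "recf list" | Prec recf recf | Mn recf

inductive evalr :: "recf \<Rightarrow> nat list \<Rightarrow> nat \<Rightarrow> bool" where
  zero: "evalr Zero xs 0"
| succ: "evalr Succ (x # xs) (Suc x)"
| proj: "i < length xs \<Longrightarrow> evalr (Proj i) xs (xs ! i)"
| comp: "list_all2 (\<lambda>g y. evalr g xs y) gs ys \<Longrightarrow> evalr f ys z \<Longrightarrow> evalr (Comp f gs) xs z"
| prec0: "evalr f xs y \<Longrightarrow> evalr (Prec f g) (0 # xs) y"
| precS: "evalr (Prec f g) (n # xs) y \<Longrightarrow> evalr g (n # y # xs) z \<Longrightarrow> evalr (Prec f g) (Suc n # xs) z"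
| mn: "evalr f (n # xs) 0 \<Longrightarrow> (\<forall>m<n. \<exists>y. evalr f (m # xs) y \<and> y \<noteq> 0) \<Longrightarrow> evalr (Mn f) xs n"

text \<open>Decidability is expressed in the statement via a total recursive decider.\<close>

type_synonym point = "int list"          \<comment> \<open>element of Z^d, as a list of length d\<close>
type_synonym pattern = "point \<rightharpoonup> nat" \<comment> \<open>finite pattern: support = dom, letters = naturals\<close>

definition l1dist :: "point \<Rightarrow> point \<Rightarrow> int" where
  "l1dist i j = sum_list (map (\<lambda>(x, y). \<bar>x - y\<bar>) (zip i j))"

definition setdist :: "point \<Rightarrow> point set \<Rightarrow> int" where
  "setdist i S = Min ((\<lambda>j. l1dist i j) ` S)"

definition vadd :: "point \<Rightarrow> point \<Rightarrow> point" where
  "vadd v j = map2 (+) v j"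

definition appears :: "nat \<Rightarrow> pattern \<Rightarrow> pattern \<Rightarrow> bool" where
  "appears d q p \<longleftrightarrow> (\<exists>v. length v = d \<and> (\<forall>j\<in>dom q. p (vadd v j) = q j))"

definition ended :: "nat \<Rightarrow> pattern set \<Rightarrow> pattern list \<Rightarrow> bool" where
  "ended d F bs \<longleftrightarrow> (\<exists>p\<in>set bs. \<exists>q\<in>F. appears d q p)"

text \<open>Positions reachable by one legal move at turn t (pass / add a tile / open new board).\<close>
definition moves :: "nat \<Rightarrow> nat set \<Rightarrow> nat \<Rightarrow> nat \<Rightarrow> pattern list \<Rightarrow> pattern list set" where
  "moves d Al T t bs =
     {bs}
     \<union> {bs[k := (bs ! k)(i \<mapsto> a)] | k i a. k < length bs \<and> length i = d \<and> i \<notin> dom (bs ! k)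
           \<and> a \<in> Al \<and> setdist i (dom (bs ! k)) \<le> 2 ^ (T - t)}
     \<union> {bs @ [[replicate d 0 \<mapsto> a]] | a. a \<in> Al}"

text \<open>win d Al F T r t bs: before turn t with r turns remaining and boards bs,
  player A can force a win (A moves at odd turns).\<close>
fun win :: "nat \<Rightarrow> nat set \<Rightarrow> pattern set \<Rightarrow> nat \<Rightarrow> nat \<Rightarrow> nat \<Rightarrow> pattern list \<Rightarrow> bool" where
  "win d Al F T 0 t bs = ended d F bs"
| "win d Al F T (Suc r) t bs =
     (ended d F bs \<or>
      (if odd t then (\<exists>bs'\<in>moves d Al T t bs. win d Al F T r (Suc t) bs')
       else (\<forall>bs'\<in>moves d Al T t bs. win d Al F T r (Suc t) bs')))"

definition A_wins :: "nat \<Rightarrow> nat set \<Rightarrow> pattern set \<Rightarrow> nat \<Rightarrow> bool" where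
  "A_wins d Al F T = win d Al F T T 1 []"

definition enc_point :: "point \<Rightarrow> nat" where
  "enc_point xs = list_encode (map int_encode xs)"

definition enc_pattern :: "(point \<times> nat) list \<Rightarrow> nat" where
  "enc_pattern ps = list_encode (map (\<lambda>(i, a). prod_encode (enc_point i, a)) ps)"

definition enc_instance :: "nat \<Rightarrow> nat list \<Rightarrow> (point \<times> nat) list list \<Rightarrow> nat \<Rightarrow> nat" where
  "enc_instance d As Fs T =
     list_encode [d, list_encode As, list_encode (map enc_pattern Fs), T]"

definition valid_instance :: "nat \<Rightarrow> nat list \<Rightarrow> (point \<times> nat) list list \<Rightarrow> bool" where
  "valid_instance d As Fs \<longleftrightarrow>
     (\<forall>ps\<in>set Fs. distinct (map fst ps) \<and> (\<forall>(i, a)\<in>set ps. length i = d \<and> a \<in> set As))"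

end

theory Submission
  imports Defs
begin


inductive_cases ZeroE: "evalr Zero xs y"
inductive_cases SuccE: "evalr Succ xs y"
inductive_cases ProjE: "evalr (Proj i) xs y"
inductive_cases CompE: "evalr (Comp f gs) xs y"
inductive_cases PrecE0: "evalr (Prec f g) (0 # xs) y"
inductive_cases PrecES: "evalr (Prec f g) (Suc n # xs) y"
inductive_cases MnE: "evalr (Mn f) xs y"

lemma evalr_det: "evalr f xs y \<Longrightarrow> evalr f xs z \<Longrightarrow> y = z"
proof (induction arbitrary: z rule: evalr.induct)
  case (zero xs) show ?case using zero.prems by (rule ZeroE) (use zero in auto)
next
  case (succ x xs) show ?case using succ.prems by (rule SuccE) (use succ in auto)
next
  case (proj i xs) show ?case using proj.prems by (rule ProjE) (use proj in auto)
next
  case (comp xs gs ys f z z')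
  from comp.prems obtain ys' where a: "list_all2 (\<lambda>g y. evalr g xs y) gs ys'" and b: "evalr f ys' z'"
    by (auto elim: CompE)
  have "ys = ys'" using comp.IH(1) a
  proof (induction gs arbitrary: ys ys')
    case Nil then show ?case by auto
  next
    case (Cons g gs)
    then obtain y ysr y' ysr' where "ys = y # ysr" "ys' = y' # ysr'" by (auto simp: list_all2_Cons1)
    with Cons show ?case by auto
  qed
  then show ?case using comp.IH(2) b by auto
next
  case (prec0 f xs y g) show ?case using prec0.prems by (rule PrecE0) (use prec0 in auto)
next
  case (precS f g n xs y z0) show ?case using precS.prems by (rule PrecES) (use precS in auto)
next
  case (mn f n xs z)
  from mn.prems have a: "evalr f (z # xs) 0" and b: "\<forall>m<z. \<exists>y. evalr f (m # xs) y \<and> y \<noteq> 0"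
    by (auto elim: MnE)
  show ?case
  proof (rule ccontr)
    assume "n \<noteq> z"
    then consider "n < z" | "z < n" by linarith
    then show False
    proof cases
      case 1 then obtain y where "evalr f (n # xs) y" "y \<noteq> 0" using b by auto
      then show False using mn.IH(1) by auto
    next
      case 2 then obtain y where "y \<noteq> 0" and IH: "\<forall>w. evalr f (z # xs) w \<longrightarrow> y = w" using mn.IH(2) by auto
      then show False using a by auto
    qed
  qed
qed

definition RK :: "nat \<Rightarrow> recf \<Rightarrow> (nat list \<Rightarrow> nat) \<Rightarrow> bool" where
  "RK k r F \<longleftrightarrow> (\<forall>xs. length xs = k \<longrightarrow> evalr r xs (F xs))"

lemma RK_zero: "RK k Zero (\<lambda>_. 0)"
  by (auto simp: RK_def intro: evalr.zero)

lemma RK_succ: "RK 1 Succ (\<lambda>xs. Suc (xs ! 0))"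
  by (auto simp: RK_def length_Suc_conv intro: evalr.succ)

lemma RK_proj: "i < k \<Longrightarrow> RK k (Proj i) (\<lambda>xs. xs ! i)"
  by (auto simp: RK_def intro: evalr.proj)

lemma RK_comp:
  assumes "RK m r H" "list_all2 (\<lambda>g G. RK k g G) gs Gs" "length Gs = m"
  shows "RK k (Comp r gs) (\<lambda>xs. H (map (\<lambda>G. G xs) Gs))"
  unfolding RK_def
proof (intro allI impI)
  fix xs :: "nat list" assume l: "length xs = k"
  have "list_all2 (\<lambda>g y. evalr g xs y) gs (map (\<lambda>G. G xs) Gs)"
    using assms(2) l by (auto simp: list_all2_conv_all_nth RK_def)
  moreover have "evalr r (map (\<lambda>G. G xs) Gs) (H (map (\<lambda>G. G xs) Gs))"
    using assms(1,3) by (auto simp: RK_def)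
  ultimately show "evalr (Comp r gs) xs (H (map (\<lambda>G. G xs) Gs))" by (rule evalr.comp)
qed

lemma RK_comp1: "RK 1 r H \<Longrightarrow> RK k g1 G1 \<Longrightarrow> RK k (Comp r [g1]) (\<lambda>xs. H [G1 xs])"
  using RK_comp[where m=1 and r=r and H=H and gs="[g1]" and k=k and Gs="[G1]"] by auto
lemma RK_comp2: "RK 2 r H \<Longrightarrow> RK k g1 G1 \<Longrightarrow> RK k g2 G2 \<Longrightarrow> RK k (Comp r [g1, g2]) (\<lambda>xs. H [G1 xs, G2 xs])"
  using RK_comp[where m=2 and r=r and H=H and gs="[g1,g2]" and k=k and Gs="[G1,G2]"] by auto
lemma RK_comp3: "RK 3 r H \<Longrightarrow> RK k g1 G1 \<Longrightarrow> RK k g2 G2 \<Longrightarrow> RK k g3 G3 \<Longrightarrow>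
   RK k (Comp r [g1, g2, g3]) (\<lambda>xs. H [G1 xs, G2 xs, G3 xs])"
  using RK_comp[where m=3 and r=r and H=H and gs="[g1,g2,g3]" and k=k and Gs="[G1,G2,G3]"] by auto

lemma RK_prec:
  assumes f: "RK k f F" and g: "RK (Suc (Suc k)) g G"
  shows "RK (Suc k) (Prec f g) (\<lambda>xs. rec_nat (F (tl xs)) (\<lambda>n y. G (n # y # tl xs)) (hd xs))"
  unfolding RK_def
proof (intro allI impI)
  fix xs :: "nat list" assume "length xs = Suc k"
  then obtain n ys where xs: "xs = n # ys" and l: "length ys = k" by (cases xs) auto
  have "evalr (Prec f g) (n # ys) (rec_nat (F ys) (\<lambda>n y. G (n # y # ys)) n)"
  proof (induction n)
    case 0 then show ?case using f l by (auto simp: RK_def intro: evalr.prec0)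
  next
    case (Suc n) then show ?case using g l by (auto simp: RK_def intro: evalr.precS)
  qed
  then show "evalr (Prec f g) xs (rec_nat (F (tl xs)) (\<lambda>n y. G (n # y # tl xs)) (hd xs))" using xs by simp
qed

lemma RK_mn:
  assumes p: "RK (Suc k) p P" and ex: "\<And>xs. length xs = k \<Longrightarrow> \<exists>m. P (m # xs) = 0"
  shows "RK k (Mn p) (\<lambda>xs. LEAST m. P (m # xs) = 0)"
  unfolding RK_def
proof (intro allI impI)
  fix xs :: "nat list" assume l: "length xs = k"
  let ?n = "LEAST m. P (m # xs) = 0"
  have z: "P (?n # xs) = 0" using ex[OF l] by (auto intro: LeastI_ex)
  have "\<forall>m<?n. \<exists>y. evalr p (m # xs) y \<and> y \<noteq> 0"
  proof (intro allI impI)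
    fix m assume "m < ?n"
    then have "P (m # xs) \<noteq> 0" by (rule not_less_Least)
    moreover have "evalr p (m # xs) (P (m # xs))" using p l by (auto simp: RK_def)
    ultimately show "\<exists>y. evalr p (m # xs) y \<and> y \<noteq> 0" by blast
  qed
  moreover have e: "evalr p (?n # xs) (P (?n # xs))" using p l by (auto simp: RK_def)
  ultimately show "evalr (Mn p) xs ?n" using z by (intro evalr.mn) auto
qed

lemma RK_cong: "RK k r F \<Longrightarrow> k = k' \<Longrightarrow> (\<And>xs. length xs = k \<Longrightarrow> F xs = G xs) \<Longrightarrow> RK k' r G"
  by (auto simp: RK_def)

lemmas lensimps = length_Suc_conv numeral_2_eq_2 numeral_3_eq_3

lemma rec_add: "rec_nat (b::nat) (\<lambda>n y. Suc y) a = a + b" by (induction a) auto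

definition "rADD = Prec (Proj 0) (Comp Succ [Proj 1])"
lemma RK_ADD: "RK 2 rADD (\<lambda>xs. xs!0 + xs!1)"
  unfolding rADD_def
  by (rule RK_cong[OF RK_prec[OF RK_proj[of 0 1] RK_comp1[OF RK_succ RK_proj[of 1 "Suc (Suc 1)"]]]])
     (auto simp: lensimps rec_add)


definition "rPRED = Prec Zero (Proj 0)"
lemma RK_PRED: "RK 1 rPRED (\<lambda>xs. xs!0 - 1)"
proof -
  have r: "rec_nat 0 (\<lambda>n y. n) a = a - 1" for a :: nat by (cases a) auto
  show ?thesis unfolding rPRED_def
  by (rule RK_cong[OF RK_prec[OF RK_zero[of 0] RK_proj[of 0 "Suc (Suc 0)"]]]) (auto simp: lensimps r)
qed

definition "rSUBr = Prec (Proj 0) (Comp rPRED [Proj 1])"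
lemma RK_SUBr: "RK 2 rSUBr (\<lambda>xs. xs!1 - xs!0)"
proof -
  have r: "rec_nat b (\<lambda>n y. y - Suc 0) a = b - a" for a b :: nat by (induction a) auto
  show ?thesis unfolding rSUBr_def
  by (rule RK_cong[OF RK_prec[OF RK_proj[of 0 1] RK_comp1[OF RK_PRED RK_proj[of 1 "Suc (Suc 1)"]]]])
     (auto simp: lensimps r)
qed

definition "rSUB = Comp rSUBr [Proj 1, Proj 0]"
lemma RK_SUB: "RK 2 rSUB (\<lambda>xs. xs!0 - xs!1)"
  unfolding rSUB_def
  by (rule RK_cong[OF RK_comp2[OF RK_SUBr RK_proj[of 1 2] RK_proj[of 0 2]]]) (auto simp: lensimps)

definition "rMUL = Prec Zero (Comp rADD [Proj 1, Proj 2])"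
lemma RK_MUL: "RK 2 rMUL (\<lambda>xs. xs!0 * xs!1)"
proof -
  have r: "rec_nat 0 (\<lambda>n y. y + b) a = a * b" for a b :: nat by (induction a) auto
  show ?thesis unfolding rMUL_def
  by (rule RK_cong[OF RK_prec[OF RK_zero[of 1] RK_comp2[OF RK_ADD RK_proj[of 1 "Suc (Suc 1)"] RK_proj[of 2 "Suc (Suc 1)"]]]])
     (auto simp: lensimps r)
qed

definition "rCOND = Prec (Proj 1) (Proj 2)"
lemma RK_COND: "RK 3 rCOND (\<lambda>xs. if xs!0 = 0 then xs!2 else xs!1)"
proof -
  have r: "rec_nat v (\<lambda>n y. u) c = (if c = 0 then v else u)" for c u v :: nat by (cases c) auto
  show ?thesis unfolding rCOND_def
  by (rule RK_cong[OF RK_prec[OF RK_proj[of 1 2] RK_proj[of 2 "Suc (Suc 2)"]]])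
     (auto simp: lensimps r)
qed

definition "rTRI = Prec Zero (Comp rADD [Proj 1, Comp Succ [Proj 0]])"
lemma RK_TRI: "RK 1 rTRI (\<lambda>xs. triangle (xs!0))"
proof -
  have r: "rec_nat 0 (\<lambda>n y. Suc (y + n)) a = triangle a" for a :: nat by (induction a) auto
  show ?thesis unfolding rTRI_def
  by (rule RK_cong[OF RK_prec[OF RK_zero[of 0] RK_comp2[OF RK_ADD RK_proj[of 1 "Suc (Suc 0)"] RK_comp1[OF RK_succ RK_proj[of 0 "Suc (Suc 0)"]]]]])
     (auto simp: lensimps r)
qed

definition "rPE = Comp rADD [Comp rTRI [Comp rADD [Proj 0, Proj 1]], Proj 0]"
lemma RK_PE: "RK 2 rPE (\<lambda>xs. prod_encode (xs!0, xs!1))"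
  unfolding rPE_def
  by (rule RK_cong[OF RK_comp2[OF RK_ADD RK_comp1[OF RK_TRI RK_comp2[OF RK_ADD RK_proj[of 0 2] RK_proj[of 1 2]]] RK_proj[of 0 2]]])
     (auto simp: lensimps prod_encode_def)



definition "pds n = (LEAST s. Suc n - triangle (Suc s) = 0)"

lemma triangle_mono: "a \<le> b \<Longrightarrow> triangle a \<le> triangle b"
  by (induction b) (auto simp: le_Suc_eq)

lemma prod_decode_pds: "prod_decode n = (n - triangle (pds n), pds n - (n - triangle (pds n)))"
proof -
  obtain a b where ab: "prod_decode n = (a, b)" by (cases "prod_decode n")
  have "prod_encode (a, b) = n" using prod_decode_inverse[of n] ab by simp
  then have n: "n = triangle (a + b) + a" by (simp add: prod_encode_def)
  have "pds n = a + b" unfolding pds_def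
  proof (rule Least_equality)
    show "Suc n - triangle (Suc (a + b)) = 0" using n by simp
  next
    fix s assume "Suc n - triangle (Suc s) = 0"
    then have "Suc n \<le> triangle (Suc s)" by simp
    show "a + b \<le> s"
    proof (rule ccontr)
      assume "\<not> a + b \<le> s"
      then have "triangle (Suc s) \<le> triangle (a + b)" by (intro triangle_mono) auto
      with \<open>Suc n \<le> triangle (Suc s)\<close> n show False by simp
    qed
  qed
  then show ?thesis using ab n by simp
qed

definition "rPDS = Mn (Comp rSUB [Comp Succ [Proj 1], Comp rTRI [Comp Succ [Proj 0]]])"
lemma RK_PDS: "RK 1 rPDS (\<lambda>xs. pds (xs!0))"
proof -
  have ex: "\<exists>m. n \<le> triangle m + m" for n :: nat by (intro exI[of _ n]) simp
  have "RK 2 (Comp rSUB [Comp Succ [Proj 1], Comp rTRI [Comp Succ [Proj 0]]]) (\<lambda>xs. Suc (xs!1) - triangle (Suc (xs!0)))"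
    by (rule RK_cong[OF RK_comp2[OF RK_SUB RK_comp1[OF RK_succ RK_proj[of 1 2]] RK_comp1[OF RK_TRI RK_comp1[OF RK_succ RK_proj[of 0 2]]]]])
      (auto simp: lensimps)
  then have "RK (Suc 1) (Comp rSUB [Comp Succ [Proj 1], Comp rTRI [Comp Succ [Proj 0]]]) (\<lambda>xs. Suc (xs!1) - triangle (Suc (xs!0)))"
    by (simp add: numeral_2_eq_2)
  then have "RK 1 rPDS (\<lambda>xs. LEAST m. (\<lambda>xs. Suc (xs!1) - triangle (Suc (xs!0))) (m # xs) = 0)"
    unfolding rPDS_def by (rule RK_mn) (simp add: ex)
  then show ?thesis unfolding pds_def by (rule RK_cong) auto
qed

definition "rFST = Comp rSUB [Proj 0, Comp rTRI [rPDS]]"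
lemma RK_FST: "RK 1 rFST (\<lambda>xs. fst (prod_decode (xs!0)))"
  unfolding rFST_def
  by (rule RK_cong[OF RK_comp2[OF RK_SUB RK_proj[of 0 1] RK_comp1[OF RK_TRI RK_PDS]]])
     (auto simp: lensimps prod_decode_pds)

definition "rSND = Comp rSUB [rPDS, rFST]"
lemma RK_SND: "RK 1 rSND (\<lambda>xs. snd (prod_decode (xs!0)))"
  unfolding rSND_def
  by (rule RK_cong[OF RK_comp2[OF RK_SUB RK_PDS RK_FST]])
     (auto simp: lensimps prod_decode_pds)

definition "rDIV2 = Mn (Comp rSUB [Comp Succ [Proj 1], Comp rADD [Comp Succ [Proj 0], Comp Succ [Proj 0]]])"
lemma RK_DIV2: "RK 1 rDIV2 (\<lambda>xs. xs!0 div 2)"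
proof -
  have "RK 2 (Comp rSUB [Comp Succ [Proj 1], Comp rADD [Comp Succ [Proj 0], Comp Succ [Proj 0]]]) (\<lambda>xs. Suc (xs!1) - (Suc (xs!0) + Suc (xs!0)))"
    by (rule RK_cong[OF RK_comp2[OF RK_SUB RK_comp1[OF RK_succ RK_proj[of 1 2]] RK_comp2[OF RK_ADD RK_comp1[OF RK_succ RK_proj[of 0 2]] RK_comp1[OF RK_succ RK_proj[of 0 2]]]]])
      (auto simp: lensimps)
  then have "RK (Suc 1) (Comp rSUB [Comp Succ [Proj 1], Comp rADD [Comp Succ [Proj 0], Comp Succ [Proj 0]]]) (\<lambda>xs. Suc (xs!1) - (Suc (xs!0) + Suc (xs!0)))"
    by (simp add: numeral_2_eq_2)
  then have "RK 1 rDIV2 (\<lambda>xs. LEAST m. (\<lambda>xs. Suc (xs!1) - (Suc (xs!0) + Suc (xs!0))) (m # xs) = 0)"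
    unfolding rDIV2_def by (rule RK_mn) (rule_tac x="xs!0" in exI, simp)
  moreover have "(LEAST m. Suc n - (Suc m + Suc m) = 0) = n div 2" for n :: nat
    by (rule Least_equality) (simp, linarith)
  ultimately show ?thesis by (elim RK_cong) auto
qed




definition cnat :: "(nat \<Rightarrow> nat) \<Rightarrow> bool" where
  "cnat F \<longleftrightarrow> (\<exists>r. RK 1 r (\<lambda>xs. F (xs!0)))"

lemma cnat_RK1: "RK 1 r H \<Longrightarrow> cnat F \<Longrightarrow> cnat (\<lambda>n. H [F n])"
  unfolding cnat_def using RK_comp1 by fastforce

lemma cnat_RK2: "RK 2 r H \<Longrightarrow> cnat F \<Longrightarrow> cnat G \<Longrightarrow> cnat (\<lambda>n. H [F n, G n])"
  unfolding cnat_def using RK_comp2 by fastforce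

lemma cnat_RK3: "RK 3 r H \<Longrightarrow> cnat F \<Longrightarrow> cnat G \<Longrightarrow> cnat K \<Longrightarrow> cnat (\<lambda>n. H [F n, G n, K n])"
  unfolding cnat_def using RK_comp3 by fastforce

lemma cnat_id: "cnat (\<lambda>n. n)"
  unfolding cnat_def using RK_proj[of 0 1] by auto

lemma cnat_const: "cnat (\<lambda>n. c)"
proof (induction c)
  case 0 show ?case unfolding cnat_def using RK_zero by auto
next
  case (Suc c) then show ?case using cnat_RK1[OF RK_succ, of "\<lambda>n. c"] by simp
qed

lemma cnat_o: "cnat F \<Longrightarrow> cnat G \<Longrightarrow> cnat (\<lambda>n. F (G n))"
  using cnat_RK1[of _ "\<lambda>xs. F (xs!0)" G] unfolding cnat_def by auto

lemma cnat_add: "cnat F \<Longrightarrow> cnat G \<Longrightarrow> cnat (\<lambda>n. F n + G n)"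
  using cnat_RK2[OF RK_ADD, of F G] by simp
lemma cnat_sub: "cnat F \<Longrightarrow> cnat G \<Longrightarrow> cnat (\<lambda>n. F n - G n)"
  using cnat_RK2[OF RK_SUB, of F G] by simp
lemma cnat_mul: "cnat F \<Longrightarrow> cnat G \<Longrightarrow> cnat (\<lambda>n. F n * G n)"
  using cnat_RK2[OF RK_MUL, of F G] by simp
lemma cnat_pe: "cnat F \<Longrightarrow> cnat G \<Longrightarrow> cnat (\<lambda>n. prod_encode (F n, G n))"
  using cnat_RK2[OF RK_PE, of F G] by simp
lemma cnat_fst: "cnat F \<Longrightarrow> cnat (\<lambda>n. fst (prod_decode (F n)))"
  using cnat_RK1[OF RK_FST, of F] by simp
lemma cnat_snd: "cnat F \<Longrightarrow> cnat (\<lambda>n. snd (prod_decode (F n)))"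
  using cnat_RK1[OF RK_SND, of F] by simp
lemma cnat_div2: "cnat F \<Longrightarrow> cnat (\<lambda>n. F n div 2)"
  using cnat_RK1[OF RK_DIV2, of F] by simp
lemma cnat_suc: "cnat F \<Longrightarrow> cnat (\<lambda>n. Suc (F n))"
  using cnat_RK1[OF RK_succ, of F] by simp
lemma cnat_if: "cnat C \<Longrightarrow> cnat F \<Longrightarrow> cnat G \<Longrightarrow> cnat (\<lambda>n. if C n = 0 then G n else F n)"
  using cnat_RK3[OF RK_COND, of C F G] by (simp add: numeral_2_eq_2 cong: if_cong)

lemma RK_ITER:
  assumes "RK 1 r (\<lambda>xs. S (xs!0))"
  shows "RK 2 (Prec (Proj 0) (Comp r [Proj 1])) (\<lambda>xs. (S ^^ (xs!0)) (xs!1))"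
proof -
  have e: "rec_nat x (\<lambda>n y. S y) k = (S ^^ k) x" for k x by (induction k) auto
  show ?thesis
    by (rule RK_cong[OF RK_prec[OF RK_proj[of 0 1] RK_comp1[OF assms RK_proj[of 1 "Suc (Suc 1)"]]]])
       (auto simp: lensimps e)
qed

lemma cnat_iter: "cnat S \<Longrightarrow> cnat K \<Longrightarrow> cnat X \<Longrightarrow> cnat (\<lambda>n. (S ^^ K n) (X n))"
proof -
  assume "cnat S" "cnat K" "cnat X"
  then obtain r where "RK 1 r (\<lambda>xs. S (xs!0))" unfolding cnat_def by auto
  from cnat_RK2[OF RK_ITER[OF this] \<open>cnat K\<close> \<open>cnat X\<close>] show ?thesis by simp
qed




class enc =
  fixes enc :: "'a \<Rightarrow> nat"
  assumes inj_enc: "inj enc"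

instantiation nat :: enc begin
definition enc_nat :: "nat \<Rightarrow> nat" where "enc_nat n = n"
instance by standard (simp add: enc_nat_def inj_on_def)
end

instantiation bool :: enc begin
definition enc_bool :: "bool \<Rightarrow> nat" where "enc_bool b = (if b then 1 else 0)"
instance by standard (simp add: enc_bool_def inj_on_def)
end

instantiation int :: enc begin
definition enc_int :: "int \<Rightarrow> nat" where "enc_int = int_encode"
instance by standard (simp add: enc_int_def inj_int_encode)
end

instantiation prod :: (enc, enc) enc begin
definition enc_prod :: "'a \<times> 'b \<Rightarrow> nat" where "enc_prod p = prod_encode (enc (fst p), enc (snd p))"
instance by standard (auto simp: enc_prod_def inj_on_def dest: injD[OF inj_enc])
end

instantiation list :: (enc) enc begin
definition enc_list :: "'a list \<Rightarrow> nat" where "enc_list xs = list_encode (map enc xs)"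
instance by standard (auto simp: enc_list_def inj_on_def list_encode_eq inj_map_eq_map[OF inj_enc])
end

lemma enc_inj_eq[simp]: "enc x = enc y \<longleftrightarrow> x = y"
  using inj_enc by (auto dest: injD)

lemma enc_pair: "enc (a, b) = prod_encode (enc a, enc b)" by (simp add: enc_prod_def)
lemma enc_Nil: "enc [] = 0" by (simp add: enc_list_def)
lemma enc_Cons: "enc (x # xs) = Suc (prod_encode (enc x, enc xs))" by (simp add: enc_list_def)
lemma enc_True: "enc True = 1" and enc_False: "enc False = 0" by (simp_all add: enc_bool_def)
lemma enc_nat[simp]: "enc (n::nat) = n" by (simp add: enc_nat_def)

lemma length_le_enc: "length xs \<le> enc xs"
proof (induction xs)
  case Nil then show ?case by simp
next
  case (Cons x xs)
  have "enc xs \<le> prod_encode (enc x, enc xs)" by (rule le_prod_encode_2)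
  then show ?case using Cons by (simp add: enc_Cons)
qed

definition cp :: "('a::enc \<Rightarrow> 'b::enc) \<Rightarrow> bool" where
  "cp f \<longleftrightarrow> (\<exists>F. cnat F \<and> (\<forall>x. F (enc x) = enc (f x)))"

named_theorems ci

lemma comp_id[ci]: "cp (\<lambda>x. x)"
  unfolding cp_def using cnat_id by auto

lemma comp_const[ci]: "cp (\<lambda>x. c)"
  unfolding cp_def using cnat_const by auto

lemma comp_o: "cp f \<Longrightarrow> cp g \<Longrightarrow> cp (\<lambda>x. f (g x))"
  unfolding cp_def using cnat_o by fastforce

lemma comp_pair[ci]: "cp f \<Longrightarrow> cp g \<Longrightarrow> cp (\<lambda>x. (f x, g x))"
  unfolding cp_def
proof (elim exE conjE)
  fix F G assume "cnat F" "\<forall>x. F (enc x) = enc (f x)" "cnat G" "\<forall>x. G (enc x) = enc (g x)"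
  then show "\<exists>H. cnat H \<and> (\<forall>x. H (enc x) = enc (f x, g x))"
    by (intro exI[of _ "\<lambda>n. prod_encode (F n, G n)"]) (simp add: cnat_pe enc_pair)
qed

lemma comp_fst[ci]: "cp f \<Longrightarrow> cp (\<lambda>x. fst (f x))"
  unfolding cp_def
proof (elim exE conjE)
  fix F assume "cnat F" "\<forall>x. F (enc x) = enc (f x)"
  then show "\<exists>H. cnat H \<and> (\<forall>x. H (enc x) = enc (fst (f x)))"
    by (intro exI[of _ "\<lambda>n. fst (prod_decode (F n))"]) (simp add: cnat_fst enc_prod_def)
qed

lemma comp_snd[ci]: "cp f \<Longrightarrow> cp (\<lambda>x. snd (f x))"
  unfolding cp_def
proof (elim exE conjE)
  fix F assume "cnat F" "\<forall>x. F (enc x) = enc (f x)"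
  then show "\<exists>H. cnat H \<and> (\<forall>x. H (enc x) = enc (snd (f x)))"
    by (intro exI[of _ "\<lambda>n. snd (prod_decode (F n))"]) (simp add: cnat_snd enc_prod_def)
qed

lemma comp_case_prod[ci]: "cp (\<lambda>x. h x (fst (f x)) (snd (f x))) \<Longrightarrow> cp (\<lambda>x. case f x of (a, b) \<Rightarrow> h x a b)"
  by (simp add: case_prod_beta)

lemma comp_enc[ci]: "cp f \<Longrightarrow> cp (\<lambda>x. enc (f x))"
  unfolding cp_def by (simp add: enc_nat)

lemma comp_dec: "surj (enc :: 'a::enc \<Rightarrow> nat) \<Longrightarrow> cp f \<Longrightarrow> cp (\<lambda>x. (inv enc (f x) :: 'a))"
  unfolding cp_def by (simp add: surj_f_inv_f)

lemma comp_int_decode[ci]: "cp f \<Longrightarrow> cp (\<lambda>x. int_decode (f x))"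
  unfolding cp_def by (simp add: enc_nat enc_int_def)

lemma comp_nat2:
  assumes "\<And>F G. cnat F \<Longrightarrow> cnat G \<Longrightarrow> cnat (\<lambda>n. H (F n) (G n))" "cp f" "cp g"
  shows "cp (\<lambda>x. H (f x) (g x))"
  using assms(2,3) unfolding cp_def
proof (elim exE conjE)
  fix F G assume "cnat F" "\<forall>x. F (enc x) = enc (f x)" "cnat G" "\<forall>x. G (enc x) = enc (g x)"
  then show "\<exists>K. cnat K \<and> (\<forall>x. K (enc x) = enc (H (f x) (g x)))"
    by (intro exI[of _ "\<lambda>n. H (F n) (G n)"]) (simp add: assms(1) enc_nat)
qed

lemma comp_nat1:
  assumes "\<And>F. cnat F \<Longrightarrow> cnat (\<lambda>n. H (F n))" "cp f"
  shows "cp (\<lambda>x. H (f x))"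
  using assms(2) unfolding cp_def
proof (elim exE conjE)
  fix F assume "cnat F" "\<forall>x. F (enc x) = enc (f x)"
  then show "\<exists>K. cnat K \<and> (\<forall>x. K (enc x) = enc (H (f x)))"
    by (intro exI[of _ "\<lambda>n. H (F n)"]) (simp add: assms(1) enc_nat)
qed

lemma comp_add[ci]: "cp f \<Longrightarrow> cp g \<Longrightarrow> cp (\<lambda>x. (f x::nat) + g x)"
  by (rule comp_nat2[OF cnat_add])
lemma comp_sub[ci]: "cp f \<Longrightarrow> cp g \<Longrightarrow> cp (\<lambda>x. (f x::nat) - g x)"
  by (rule comp_nat2[OF cnat_sub])
lemma comp_mul[ci]: "cp f \<Longrightarrow> cp g \<Longrightarrow> cp (\<lambda>x. (f x::nat) * g x)"
  by (rule comp_nat2[OF cnat_mul])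
lemma comp_div2[ci]: "cp f \<Longrightarrow> cp (\<lambda>x. (f x::nat) div 2)"
  by (rule comp_nat1[OF cnat_div2])
lemma comp_Suc[ci]: "cp f \<Longrightarrow> cp (\<lambda>x. Suc (f x))"
  by (rule comp_nat1[OF cnat_suc])

lemma comp_if[ci]: "cp b \<Longrightarrow> cp f \<Longrightarrow> cp g \<Longrightarrow> cp (\<lambda>x. if b x then f x else g x)"
  unfolding cp_def
proof (elim exE conjE)
  fix B F G assume "cnat B" "\<forall>x. B (enc x) = enc (b x)" "cnat F" "\<forall>x. F (enc x) = enc (f x)"
     "cnat G" "\<forall>x. G (enc x) = enc (g x)"
  then show "\<exists>K. cnat K \<and> (\<forall>x. K (enc x) = enc (if b x then f x else g x))"
    by (intro exI[of _ "\<lambda>n. if B n = 0 then G n else F n"]) (simp add: cnat_if enc_bool_def)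
qed

lemma comp_eq[ci]: "cp f \<Longrightarrow> cp g \<Longrightarrow> cp (\<lambda>x. f x = g x)"
  unfolding cp_def
proof (elim exE conjE)
  fix F G assume "cnat F" "\<forall>x. F (enc x) = enc (f x)" "cnat G" "\<forall>x. G (enc x) = enc (g x)"
  then show "\<exists>K. cnat K \<and> (\<forall>x. K (enc x) = enc (f x = g x))"
    using cnat_if[OF cnat_add[OF cnat_sub cnat_sub] cnat_const cnat_const, of F G G F 1 0]
    by (intro exI[of _ "\<lambda>n. if (F n - G n) + (G n - F n) = 0 then 1 else 0"])
       (auto simp: enc_bool_def)
qed

lemma comp_le[ci]: "cp f \<Longrightarrow> cp g \<Longrightarrow> cp (\<lambda>x. (f x::nat) \<le> g x)"
  unfolding cp_def
proof (elim exE conjE)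
  fix F G assume "cnat F" "\<forall>x. F (enc x) = enc (f x)" "cnat G" "\<forall>x. G (enc x) = enc (g x)"
  then show "\<exists>K. cnat K \<and> (\<forall>x. K (enc x) = enc (f x \<le> g x))"
    using cnat_if[OF cnat_sub cnat_const cnat_const, of F G 1 0]
    by (intro exI[of _ "\<lambda>n. if F n - G n = 0 then 1 else 0"])
       (auto simp: enc_bool_def)
qed

lemma comp_less[ci]: "cp f \<Longrightarrow> cp g \<Longrightarrow> cp (\<lambda>x. (f x::nat) < g x)"
  using comp_le[of "\<lambda>x. Suc (f x)" g] comp_Suc[of f] by (simp add: Suc_le_eq)

lemma comp_not[ci]: "cp P \<Longrightarrow> cp (\<lambda>x. \<not> P x)"
proof -
  assume "cp P" then have "cp (\<lambda>x. if P x then False else True)" by (intro comp_if comp_const)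
  moreover have "(\<lambda>x. if P x then False else True) = (\<lambda>x. \<not> P x)" by (rule ext) simp
  ultimately show ?thesis by simp
qed
lemma comp_conj[ci]: "cp P \<Longrightarrow> cp Q \<Longrightarrow> cp (\<lambda>x. P x \<and> Q x)"
proof -
  assume "cp P" "cp Q" then have "cp (\<lambda>x. if P x then Q x else False)" by (intro comp_if comp_const)
  moreover have "(\<lambda>x. if P x then Q x else False) = (\<lambda>x. P x \<and> Q x)" by (rule ext) simp
  ultimately show ?thesis by simp
qed
lemma comp_disj[ci]: "cp P \<Longrightarrow> cp Q \<Longrightarrow> cp (\<lambda>x. P x \<or> Q x)"
proof -
  assume "cp P" "cp Q" then have "cp (\<lambda>x. if P x then True else Q x)" by (intro comp_if comp_const)
  moreover have "(\<lambda>x. if P x then True else Q x) = (\<lambda>x. P x \<or> Q x)" by (rule ext) simp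
  ultimately show ?thesis by simp
qed

lemma comp_Cons[ci]: "cp f \<Longrightarrow> cp g \<Longrightarrow> cp (\<lambda>x. f x # g x)"
  unfolding cp_def
proof (elim exE conjE)
  fix F G assume "cnat F" "\<forall>x. F (enc x) = enc (f x)" "cnat G" "\<forall>x. G (enc x) = enc (g x)"
  then show "\<exists>H. cnat H \<and> (\<forall>x. H (enc x) = enc (f x # g x))"
    by (intro exI[of _ "\<lambda>n. Suc (prod_encode (F n, G n))"]) (simp add: cnat_pe cnat_suc enc_Cons)
qed

lemma comp_case_list[ci]:
  assumes "cp l" "cp a" "cp (\<lambda>p. b (fst p) (fst (snd p)) (snd (snd p)))"
  shows "cp (\<lambda>x. case l x of [] \<Rightarrow> a x | y # ys \<Rightarrow> b x y ys)"
  using assms unfolding cp_def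
proof (elim exE conjE)
  fix L A B assume L: "cnat L" "\<forall>x. L (enc x) = enc (l x)" and A: "cnat A" "\<forall>x. A (enc x) = enc (a x)"
    and B: "cnat B" "\<forall>x. B (enc x) = enc (b (fst x) (fst (snd x)) (snd (snd x)))"
  have "cnat (\<lambda>n. if L n = 0 then A n else B (prod_encode (n, L n - 1)))"
    by (intro cnat_if cnat_o[OF B(1)] cnat_pe cnat_id cnat_sub L(1) A(1) cnat_const)
  moreover have "\<forall>x. (if L (enc x) = 0 then A (enc x) else B (prod_encode (enc x, L (enc x) - 1)))
      = enc (case l x of [] \<Rightarrow> a x | y # ys \<Rightarrow> b x y ys)"
  proof
    fix x show "(if L (enc x) = 0 then A (enc x) else B (prod_encode (enc x, L (enc x) - 1)))
      = enc (case l x of [] \<Rightarrow> a x | y # ys \<Rightarrow> b x y ys)"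
    proof (cases "l x")
      case Nil then show ?thesis using L A by (simp add: enc_Nil)
    next
      case (Cons y ys)
      have "B (enc (x, y, ys)) = enc (b x y ys)" using B(2) by simp
      then show ?thesis using L A Cons by (simp add: enc_Cons enc_pair)
    qed
  qed
  ultimately show "\<exists>K. cnat K \<and> (\<forall>x. K (enc x) = enc (case l x of [] \<Rightarrow> a x | y # ys \<Rightarrow> b x y ys))"
    by blast
qed

lemma iter_enc:
  fixes s :: "'a::enc \<Rightarrow> 'b::enc \<Rightarrow> 'b"
  assumes S: "\<forall>p. S (enc p) = enc (s (fst p) (snd p))"
  shows "((\<lambda>m. prod_encode (fst (prod_decode m), S m)) ^^ j) (prod_encode (enc x, enc st))
      = prod_encode (enc x, enc ((s x ^^ j) st))"
proof (induction j)
  case 0 show ?case by simp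
next
  case (Suc j)
  have "S (enc (x, (s x ^^ j) st)) = enc (s x ((s x ^^ j) st))" using S by simp
  then show ?case using Suc by (simp add: enc_pair)
qed

lemma comp_iter[ci]:
  fixes s :: "'a::enc \<Rightarrow> 'b::enc \<Rightarrow> 'b"
  assumes "cp (\<lambda>p. s (fst p) (snd p))" "cp k" "cp x0"
  shows "cp (\<lambda>x. (s x ^^ k x) (x0 x))"
  using assms unfolding cp_def
proof (elim exE conjE)
  fix S K X assume S: "cnat S" "\<forall>x. S (enc x) = enc (s (fst x) (snd x))"
    and K: "cnat K" "\<forall>x. K (enc x) = enc (k x)" and X: "cnat X" "\<forall>x. X (enc x) = enc (x0 x)"
  let ?S = "\<lambda>m. prod_encode (fst (prod_decode m), S m)"
  note it = iter_enc[OF S(2)]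
  have "cnat (\<lambda>n. snd (prod_decode ((?S ^^ K n) (prod_encode (n, X n)))))"
    by (intro cnat_snd cnat_iter cnat_pe cnat_fst cnat_id S(1) K(1) X(1))
  moreover have "snd (prod_decode ((?S ^^ K (enc x)) (prod_encode (enc x, X (enc x))))) = enc ((s x ^^ k x) (x0 x))" for x
    using it[where x=x and st="x0 x" and j="k x"] K(2) X(2) by (simp add: enc_nat)
  ultimately show "\<exists>H. cnat H \<and> (\<forall>x. H (enc x) = enc ((s x ^^ k x) (x0 x)))" by blast
qed




lemma comp_app1: "cp f \<Longrightarrow> cp e \<Longrightarrow> cp (\<lambda>x. f (e x))"
  by (rule comp_o)

lemma comp_app2: "cp (\<lambda>p. h (fst p) (snd p)) \<Longrightarrow> cp e1 \<Longrightarrow> cp e2 \<Longrightarrow> cp (\<lambda>x. h (e1 x) (e2 x))"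
  by (drule comp_o[OF _ comp_pair]) simp_all

lemma comp_app3: "cp (\<lambda>p. h (fst p) (fst (snd p)) (snd (snd p))) \<Longrightarrow> cp e1 \<Longrightarrow> cp e2 \<Longrightarrow> cp e3 \<Longrightarrow>
   cp (\<lambda>x. h (e1 x) (e2 x) (e3 x))"
  by (drule comp_o[OF _ comp_pair[OF _ comp_pair]]) simp_all

definition fstep :: "('b \<Rightarrow> 'a \<Rightarrow> 'b) \<Rightarrow> 'a list \<times> 'b \<Rightarrow> 'a list \<times> 'b" where
  "fstep h st = (case st of (rest, acc) \<Rightarrow> (case rest of [] \<Rightarrow> ([], acc) | y # ys \<Rightarrow> (ys, h acc y)))"

lemma fstep_iter: "length l \<le> n \<Longrightarrow> (fstep h ^^ n) (l, acc) = ([], foldl h acc l)"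
proof (induction l arbitrary: n acc)
  case Nil
  have "(fstep h ^^ n) ([], acc) = ([], acc)" by (induction n) (auto simp: fstep_def)
  then show ?case by simp
next
  case (Cons y ys)
  then obtain m where n: "n = Suc m" and "length ys \<le> m" by (cases n) auto
  then show ?case using Cons.IH by (simp add: funpow_Suc_right fstep_def del: funpow.simps)
qed

lemma comp_foldl[ci]:
  fixes h :: "'e::enc \<Rightarrow> 'b::enc \<Rightarrow> 'a::enc \<Rightarrow> 'b"
  assumes h: "cp (\<lambda>p. h (fst p) (fst (snd p)) (snd (snd p)))" and a: "cp a" and xs: "cp xs"
  shows "cp (\<lambda>x. foldl (h x) (a x) (xs x))"
proof -
  have e: "foldl (h x) (a x) (xs x) = snd ((fstep (h x) ^^ enc (xs x)) (xs x, a x))" for x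
    using fstep_iter[where l="xs x" and h="h x" and acc="a x" and n="enc (xs x)", OF length_le_enc] by simp
  have "cp (\<lambda>x. snd ((fstep (h x) ^^ enc (xs x)) (xs x, a x)))"
    unfolding fstep_def
    by (intro ci comp_app3[OF h] a xs)
  then show ?thesis unfolding e .
qed

lemma foldl_cons_rev: "foldl (\<lambda>acc y. g y # acc) acc0 l = rev (map g l) @ acc0"
  by (induction l arbitrary: acc0) auto

lemma comp_rev[ci]: "cp xs \<Longrightarrow> cp (\<lambda>x. rev (xs x))"
proof -
  assume xs: "cp xs"
  have "cp (\<lambda>x. foldl (\<lambda>acc y. y # acc) [] (xs x))" by (intro ci xs)
  then show ?thesis by (simp add: foldl_cons_rev)
qed

lemma comp_append[ci]: "cp xs \<Longrightarrow> cp ys \<Longrightarrow> cp (\<lambda>x. xs x @ ys x)"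
proof -
  assume xs: "cp xs" and ys: "cp ys"
  have "cp (\<lambda>x. foldl (\<lambda>acc y. y # acc) (ys x) (rev (xs x)))" by (intro ci xs ys)
  then show ?thesis by (simp add: foldl_cons_rev)
qed

lemma comp_map[ci]:
  fixes f :: "'e::enc \<Rightarrow> 'a::enc \<Rightarrow> 'b::enc"
  assumes f: "cp (\<lambda>p. f (fst p) (snd p))" and xs: "cp xs"
  shows "cp (\<lambda>x. map (f x) (xs x))"
proof -
  have "cp (\<lambda>x. rev (foldl (\<lambda>acc y. f x y # acc) [] (xs x)))" by (intro ci comp_app2[OF f] xs)
  then show ?thesis using foldl_cons_rev[of "f x" "[]" for x] by simp
qed

lemma foldl_append_concat: "foldl (\<lambda>acc ys. acc @ ys) acc0 l = acc0 @ concat l"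
  by (induction l arbitrary: acc0) auto

lemma comp_concat[ci]: "cp xs \<Longrightarrow> cp (\<lambda>x. concat (xs x))"
proof -
  assume xs: "cp xs"
  have "cp (\<lambda>x. foldl (\<lambda>acc ys. acc @ ys) [] (xs x))" by (intro ci xs)
  then show ?thesis by (simp add: foldl_append_concat)
qed

lemma foldl_filter: "foldl (\<lambda>acc y. if P y then y # acc else acc) acc0 l = rev (filter P l) @ acc0"
  by (induction l arbitrary: acc0) auto

lemma comp_filter[ci]:
  fixes P :: "'e::enc \<Rightarrow> 'a::enc \<Rightarrow> bool"
  assumes P: "cp (\<lambda>p. P (fst p) (snd p))" and xs: "cp xs"
  shows "cp (\<lambda>x. filter (P x) (xs x))"
proof -
  have "cp (\<lambda>x. rev (foldl (\<lambda>acc y. if P x y then y # acc else acc) [] (xs x)))" by (intro ci comp_app2[OF P] xs)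
  then show ?thesis using foldl_filter[of "P x" "[]" for x] by simp
qed

lemma foldl_ex: "foldl (\<lambda>b y. b \<or> P y) b0 l = (b0 \<or> list_ex P l)"
  by (induction l arbitrary: b0) auto
lemma foldl_all: "foldl (\<lambda>b y. b \<and> P y) b0 l = (b0 \<and> list_all P l)"
  by (induction l arbitrary: b0) auto

lemma comp_list_ex[ci]:
  fixes P :: "'e::enc \<Rightarrow> 'a::enc \<Rightarrow> bool"
  assumes P: "cp (\<lambda>p. P (fst p) (snd p))" and xs: "cp xs"
  shows "cp (\<lambda>x. list_ex (P x) (xs x))"
proof -
  have "cp (\<lambda>x. foldl (\<lambda>b y. b \<or> P x y) False (xs x))" by (intro ci comp_app2[OF P] xs)
  then show ?thesis by (simp add: foldl_ex)
qed

lemma comp_list_all[ci]: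
  fixes P :: "'e::enc \<Rightarrow> 'a::enc \<Rightarrow> bool"
  assumes P: "cp (\<lambda>p. P (fst p) (snd p))" and xs: "cp xs"
  shows "cp (\<lambda>x. list_all (P x) (xs x))"
proof -
  have "cp (\<lambda>x. foldl (\<lambda>b y. b \<and> P x y) True (xs x))" by (intro ci comp_app2[OF P] xs)
  then show ?thesis by (simp add: foldl_all)
qed

lemma foldl_length: "foldl (\<lambda>n y. Suc n) n0 l = n0 + length l"
  by (induction l arbitrary: n0) auto

lemma comp_length[ci]: "cp xs \<Longrightarrow> cp (\<lambda>x. length (xs x))"
proof -
  assume xs: "cp xs"
  have "cp (\<lambda>x. foldl (\<lambda>n y. Suc n) 0 (xs x))" by (intro ci xs)
  then show ?thesis by (simp add: foldl_length)
qed

lemma foldl_sum: "foldl (\<lambda>n y. n + y) n0 l = n0 + sum_list (l::nat list)"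
  by (induction l arbitrary: n0) auto

lemma comp_sum_list[ci]: "cp xs \<Longrightarrow> cp (\<lambda>x. sum_list (xs x :: nat list))"
proof -
  assume xs: "cp xs"
  have "cp (\<lambda>x. foldl (\<lambda>n y. n + y) 0 (xs x))" by (intro ci xs)
  then show ?thesis by (simp add: foldl_sum)
qed

lemma tl_case: "tl l = (case l of [] \<Rightarrow> [] | y # ys \<Rightarrow> ys)" by (cases l) auto

lemma comp_tl[ci]: "cp xs \<Longrightarrow> cp (\<lambda>x. tl (xs x))"
  unfolding tl_case by (intro ci)

lemma drop_iter: "drop k l = (tl ^^ k) l"
  by (induction k arbitrary: l) (auto simp: drop_Suc funpow_Suc_right simp del: funpow.simps)

lemma comp_drop[ci]: "cp k \<Longrightarrow> cp xs \<Longrightarrow> cp (\<lambda>x. drop (k x) (xs x))"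
proof -
  assume k: "cp k" and xs: "cp xs"
  have "cp (\<lambda>x. ((\<lambda>l. tl l) ^^ k x) (xs x))" by (intro ci k xs)
  then show ?thesis by (simp add: drop_iter)
qed

lemma take_aux: "take (length l - (length l - k)) l = take k l"
  by (cases "k \<le> length l") auto

lemma comp_take[ci]: "cp k \<Longrightarrow> cp xs \<Longrightarrow> cp (\<lambda>x. take (k x) (xs x))"
proof -
  assume k: "cp k" and xs: "cp xs"
  have "cp (\<lambda>x. rev (drop (length (xs x) - k x) (rev (xs x))))" by (intro ci k xs)
  then show ?thesis by (simp add: rev_drop take_aux)
qed

lemma comp_int[ci]: "cp f \<Longrightarrow> cp (\<lambda>x. int (f x))"
proof -
  assume f: "cp f"
  have "cp (\<lambda>x. int_decode (f x + f x))" by (intro ci f)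
  moreover have "int_decode (n + n) = int n" for n
    by (simp add: int_decode_def sum_decode_def)
  ultimately show ?thesis by simp
qed




definition posn :: "nat \<Rightarrow> nat" where "posn c = (if c div 2 + c div 2 = c then c div 2 else 0)"
definition negn :: "nat \<Rightarrow> nat" where "negn c = (if c div 2 + c div 2 = c then 0 else Suc c div 2)"

lemma comp_posn[ci]: "cp f \<Longrightarrow> cp (\<lambda>x. posn (f x))" unfolding posn_def by (intro ci)
lemma comp_negn[ci]: "cp f \<Longrightarrow> cp (\<lambda>x. negn (f x))" unfolding negn_def by (intro ci)

lemma int_decode_pn: "int_decode c = int (posn c) - int (negn c)"
  by (auto simp: int_decode_def sum_decode_def posn_def negn_def) presburger+

lemma int_encode_diff: "int_encode (int A - int B) = (if B \<le> A then (A - B) + (A - B) else (B - A) + (B - A) - 1)"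
  by (auto simp: int_encode_def sum_encode_def nat_diff_distrib)

lemma comp_int_add[ci]: "cp f \<Longrightarrow> cp g \<Longrightarrow> cp (\<lambda>x. (f x :: int) + g x)"
proof -
  assume f: "cp f" and g: "cp g"
  let ?A = "\<lambda>x. posn (enc (f x)) + posn (enc (g x))" and ?B = "\<lambda>x. negn (enc (f x)) + negn (enc (g x))"
  have "cp (\<lambda>x. int_decode (if ?B x \<le> ?A x then (?A x - ?B x) + (?A x - ?B x) else (?B x - ?A x) + (?B x - ?A x) - 1))"
    by (intro ci f g)
  moreover have "f x + g x = int_decode (if ?B x \<le> ?A x then (?A x - ?B x) + (?A x - ?B x) else (?B x - ?A x) + (?B x - ?A x) - 1)" for x
  proof -
    have "f x + g x = int (?A x) - int (?B x)"
      using int_decode_pn[of "enc (f x)"] int_decode_pn[of "enc (g x)"] by (simp add: enc_int_def)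
    then show ?thesis by (simp only: int_encode_diff[symmetric] int_encode_inverse)
  qed
  ultimately show ?thesis by simp
qed

lemma comp_int_sub[ci]: "cp f \<Longrightarrow> cp g \<Longrightarrow> cp (\<lambda>x. (f x :: int) - g x)"
proof -
  assume f: "cp f" and g: "cp g"
  let ?A = "\<lambda>x. posn (enc (f x)) + negn (enc (g x))" and ?B = "\<lambda>x. negn (enc (f x)) + posn (enc (g x))"
  have "cp (\<lambda>x. int_decode (if ?B x \<le> ?A x then (?A x - ?B x) + (?A x - ?B x) else (?B x - ?A x) + (?B x - ?A x) - 1))"
    by (intro ci f g)
  moreover have "f x - g x = int_decode (if ?B x \<le> ?A x then (?A x - ?B x) + (?A x - ?B x) else (?B x - ?A x) + (?B x - ?A x) - 1)" for x
  proof -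
    have "f x - g x = int (?A x) - int (?B x)"
      using int_decode_pn[of "enc (f x)"] int_decode_pn[of "enc (g x)"] by (simp add: enc_int_def)
    then show ?thesis by (simp only: int_encode_diff[symmetric] int_encode_inverse)
  qed
  ultimately show ?thesis by simp
qed

lemma comp_nat_abs[ci]: "cp f \<Longrightarrow> cp (\<lambda>x. nat \<bar>f x :: int\<bar>)"
proof -
  assume f: "cp f"
  have "cp (\<lambda>x. Suc (enc (f x)) div 2)" by (intro ci f)
  moreover have "nat \<bar>i\<bar> = Suc (enc i) div 2" for i :: int
    by (auto simp: enc_int_def int_encode_def sum_encode_def)
  ultimately show ?thesis by simp
qed

lemma comp_odd[ci]: "cp f \<Longrightarrow> cp (\<lambda>x. odd (f x :: nat))"
proof -
  assume f: "cp f"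
  have "cp (\<lambda>x. \<not> (f x div 2 + f x div 2 = f x))" by (intro ci f)
  moreover have "odd n \<longleftrightarrow> \<not> (n div 2 + n div 2 = n)" for n :: nat by presburger
  ultimately show ?thesis by simp
qed

lemma comp_pow2[ci]: "cp f \<Longrightarrow> cp (\<lambda>x. (2::nat) ^ f x)"
proof -
  assume f: "cp f"
  have "cp (\<lambda>x. ((\<lambda>y::nat. y + y) ^^ f x) 1)" by (intro ci f)
  moreover have "((\<lambda>y. y + y) ^^ n) 1 = (2::nat) ^ n" for n by (induction n) auto
  ultimately show ?thesis by simp
qed

lemma funpow_cons_replicate: "((\<lambda>l. c # l) ^^ k) [] = replicate k c"
  by (induction k) auto

lemma comp_replicate[ci]: "cp n \<Longrightarrow> cp a \<Longrightarrow> cp (\<lambda>x. replicate (n x) (a x))"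
proof -
  assume n: "cp n" and a: "cp a"
  have "cp (\<lambda>x. ((\<lambda>l. a x # l) ^^ n x) [])" by (intro ci n a comp_app1[OF a])
  then show ?thesis unfolding funpow_cons_replicate .
qed

definition zstep :: "('a list \<times> 'a list) \<times> ('a \<times> 'a) list \<Rightarrow> 'a \<Rightarrow> ('a list \<times> 'a list) \<times> ('a \<times> 'a) list" where
  "zstep st x = st"

definition zipC :: "'a list \<Rightarrow> 'b list \<Rightarrow> ('a \<times> 'b) list" where
  "zipC xs ys = rev (fst (foldl (\<lambda>st x. case snd st of [] \<Rightarrow> st | y # r \<Rightarrow> ((x, y) # fst st, r)) ([], ys) xs))"

lemma zipC_aux: "foldl (\<lambda>st x. case snd st of [] \<Rightarrow> st | y # r \<Rightarrow> ((x, y) # fst st, r)) (acc, ys) xs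
   = (rev (zip xs ys) @ acc, drop (length xs) ys)"
proof (induction xs arbitrary: acc ys)
  case Nil then show ?case by simp
next
  case (Cons x xs)
  show ?case
  proof (cases ys)
    case Nil
    have "foldl (\<lambda>st x. case snd st of [] \<Rightarrow> st | y # r \<Rightarrow> ((x, y) # fst st, r)) (acc, []) l = (acc, [])" for l :: "'a list"
      by (induction l) auto
    then show ?thesis using Nil by simp
  next
    case (Cons y r) then show ?thesis using Cons.IH by simp
  qed
qed

lemma zipC_zip: "zipC xs ys = zip xs ys"
  unfolding zipC_def zipC_aux by simp

lemma comp_zip[ci]: "cp xs \<Longrightarrow> cp ys \<Longrightarrow> cp (\<lambda>x. zip (xs x) (ys x))"
proof -
  assume xs: "cp xs" and ys: "cp ys"
  have "cp (\<lambda>x. zipC (xs x) (ys x))" unfolding zipC_def by (intro ci xs ys)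
  then show ?thesis by (simp add: zipC_zip)
qed




lemma chunk_lemma:
  "foldl (\<lambda>st s. (fst st @ [H s (take (length (M s)) (snd st))], drop (length (M s)) (snd st)))
     (out, map g (concat (map M L)) @ rest) L
   = (out @ map (\<lambda>s. H s (map g (M s))) L, rest)"
  by (induction L arbitrary: out) (simp_all add: take_map drop_map)

lemma lev_iter:
  "((\<lambda>st. (concat (map M (fst st)), fst st # snd st)) ^^ k) ([s], [])
   = (((\<lambda>cur. concat (map M cur)) ^^ k) [s], rev (map (\<lambda>j. ((\<lambda>cur. concat (map M cur)) ^^ j) [s]) [0..<k]))"
  by (induction k) auto

lemma comp_rec:
  fixes f :: "'e::enc \<Rightarrow> nat \<Rightarrow> 's::enc \<Rightarrow> 'v::enc" and B :: "'e \<Rightarrow> 's \<Rightarrow> 'v"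
    and M :: "'e \<Rightarrow> 's \<Rightarrow> 's list" and H :: "'e \<Rightarrow> 's \<Rightarrow> 'v list \<Rightarrow> 'v"
  assumes f0: "\<And>e s. f e 0 s = B e s" and fS: "\<And>e r s. f e (Suc r) s = H e s (map (f e r) (M e s))"
    and cB: "cp (\<lambda>p. B (fst p) (snd p))" and cM: "cp (\<lambda>p. M (fst p) (snd p))"
    and cH: "cp (\<lambda>p. H (fst p) (fst (snd p)) (snd (snd p)))"
  shows "cp (\<lambda>p. f (fst p) (fst (snd p)) (snd (snd p)))"
proof -
  define CH where "CH e = (\<lambda>vals L. fst (foldl (\<lambda>st s. (fst st @ [H e s (take (length (M e s)) (snd st))], drop (length (M e s)) (snd st))) ([], vals) L))" for e
  define lev where "lev e s j = ((\<lambda>cur. concat (map (M e) cur)) ^^ j) [s]" for e s j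
  have ch: "CH e (map g (concat (map (M e) L))) L = map (\<lambda>s. H e s (map g (M e s))) L" for e L g
    unfolding CH_def using chunk_lemma[where H="H e" and M="M e" and out="[]" and g=g and L=L and rest="[]"] by simp
  have fold: "foldl (CH e) (map (f e m) (lev e s k)) (rev (map (lev e s) [0..<k])) = map (f e (m + k)) (lev e s 0)" for e s k m
  proof (induction k arbitrary: m)
    case 0 then show ?case by simp
  next
    case (Suc k)
    have "CH e (map (f e m) (lev e s (Suc k))) (lev e s k) = map (f e (Suc m)) (lev e s k)"
      using ch[where e=e and L="lev e s k" and g="f e m"] by (simp add: lev_def fS map_concat)
    then show ?case using Suc.IH[of "Suc m"] by simp
  qed
  have main: "f e r s = (case foldl (CH e) (map (B e) (fst (((\<lambda>st. (concat (map (M e) (fst st)), fst st # snd st)) ^^ r) ([s], []))))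
       (snd (((\<lambda>st. (concat (map (M e) (fst st)), fst st # snd st)) ^^ r) ([s], []))) of [] \<Rightarrow> B e s | v # _ \<Rightarrow> v)" for e r s
  proof -
    have lv: "(\<lambda>j. ((\<lambda>cur. concat (map (M e) cur)) ^^ j) [s]) = lev e s" by (simp add: lev_def fun_eq_iff)
    have lv2: "((\<lambda>cur. concat (map (M e) cur)) ^^ r) [s] = lev e s r" by (simp add: lev_def)
    have b: "B e = f e 0" by (simp add: f0 fun_eq_iff)
    have "foldl (CH e) (map (f e 0) (lev e s r)) (rev (map (lev e s) [0..<r])) = [f e r s]"
      using fold[of e 0 s r] by (simp add: lev_def)
    then show ?thesis unfolding lev_iter fst_conv snd_conv lv lv2 b by simp
  qed
  have "cp (\<lambda>p. case foldl (CH (fst p)) (map (B (fst p)) (fst (((\<lambda>st. (concat (map (M (fst p)) (fst st)), fst st # snd st)) ^^ fst (snd p)) ([snd (snd p)], []))))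
       (snd (((\<lambda>st. (concat (map (M (fst p)) (fst st)), fst st # snd st)) ^^ fst (snd p)) ([snd (snd p)], []))) of [] \<Rightarrow> B (fst p) (snd (snd p)) | v # _ \<Rightarrow> v)"
    unfolding CH_def by (intro ci comp_app2[OF cB] comp_app2[OF cM] comp_app3[OF cH])
  then show ?thesis unfolding main[symmetric] .
qed




type_synonym board = "(int list \<times> nat) list"

definition vaddL :: "int list \<Rightarrow> int list \<Rightarrow> int list" where
  "vaddL v j = map (\<lambda>p. fst p + snd p) (zip v j)"
definition vsubL :: "int list \<Rightarrow> int list \<Rightarrow> int list" where
  "vsubL v j = map (\<lambda>p. fst p - snd p) (zip v j)"

definition appearsC :: "board \<Rightarrow> board \<Rightarrow> bool" where
  "appearsC q p = (case q of [] \<Rightarrow> True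
     | jb # _ \<Rightarrow> list_ex (\<lambda>ia. list_all (\<lambda>ja. list_ex (\<lambda>kb. kb = (vaddL (vsubL (fst ia) (fst jb)) (fst ja), snd ja)) p) q) p)"

definition endedC :: "board list \<Rightarrow> board list \<Rightarrow> bool" where
  "endedC Fs bs = list_ex (\<lambda>p. list_ex (\<lambda>q. appearsC q p) Fs) bs"

definition rng :: "nat \<Rightarrow> nat list" where "rng m = ((\<lambda>l. length l # l) ^^ m) []"
definition intsR :: "nat \<Rightarrow> int list" where "intsR R = map (\<lambda>n. int n - int R) (rng (R + R + 1))"
definition boxes :: "nat \<Rightarrow> nat \<Rightarrow> int list list" where
  "boxes R m = ((\<lambda>L. concat (map (\<lambda>v. map (\<lambda>z. z # v) (intsR R)) L)) ^^ m) [[]]"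
definition normL :: "int list \<Rightarrow> nat" where "normL v = sum_list (map (\<lambda>z. nat \<bar>z\<bar>) v)"
definition nthb :: "board list \<Rightarrow> nat \<Rightarrow> board" where
  "nthb bs k = (case drop k bs of [] \<Rightarrow> [] | p # _ \<Rightarrow> p)"
definition updb :: "board list \<Rightarrow> nat \<Rightarrow> board \<Rightarrow> board list" where
  "updb bs k p = take k bs @ p # drop (Suc k) bs"

definition tileMoves :: "nat \<Rightarrow> nat list \<Rightarrow> nat \<Rightarrow> board list \<Rightarrow> board list list" where
  "tileMoves d As R bs = concat (map (\<lambda>k. concat (map (\<lambda>j. concat (map (\<lambda>v.
      if normL v \<le> R \<and> list_all (\<lambda>kb. fst kb \<noteq> vaddL j v) (nthb bs k)
      then map (\<lambda>a. updb bs k ((vaddL j v, a) # nthb bs k)) As else [])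
     (boxes R d))) (map fst (nthb bs k)))) (rng (length bs)))"

definition movesC :: "nat \<Rightarrow> nat list \<Rightarrow> nat \<Rightarrow> nat \<Rightarrow> board list \<Rightarrow> board list list" where
  "movesC d As T t bs = bs # tileMoves d As (2 ^ (T - t)) bs @ map (\<lambda>a. bs @ [[(replicate d 0, a)]]) As"

type_synonym genv = "nat \<times> nat list \<times> board list \<times> nat"

definition Bw :: "genv \<Rightarrow> nat \<times> board list \<Rightarrow> bool" where
  "Bw e s = endedC (fst (snd (snd e))) (snd s)"
definition Mw :: "genv \<Rightarrow> nat \<times> board list \<Rightarrow> (nat \<times> board list) list" where
  "Mw e s = map (\<lambda>b. (Suc (fst s), b)) (movesC (fst e) (fst (snd e)) (snd (snd (snd e))) (fst s) (snd s))"
definition Hw :: "genv \<Rightarrow> nat \<times> board list \<Rightarrow> bool list \<Rightarrow> bool" where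
  "Hw e s vs = (endedC (fst (snd (snd e))) (snd s) \<or> (if odd (fst s) then list_ex (\<lambda>v. v) vs else list_all (\<lambda>v. v) vs))"

fun winC :: "genv \<Rightarrow> nat \<Rightarrow> nat \<times> board list \<Rightarrow> bool" where
  "winC e 0 s = Bw e s"
| "winC e (Suc r) s = Hw e s (map (winC e r) (Mw e s))"

lemma cp_Bw: "cp (\<lambda>p. Bw (fst p) (snd p))"
  unfolding Bw_def endedC_def appearsC_def vaddL_def vsubL_def by (intro ci)

lemma cp_Hw: "cp (\<lambda>p. Hw (fst p) (fst (snd p)) (snd (snd p)))"
  unfolding Hw_def endedC_def appearsC_def vaddL_def vsubL_def by (intro ci)

lemma cp_Mw: "cp (\<lambda>p. Mw (fst p) (snd p))"
  unfolding Mw_def movesC_def tileMoves_def rng_def intsR_def boxes_def normL_def nthb_def updb_def vaddL_def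
  by (intro ci)

lemma cp_winC: "cp (\<lambda>p. winC (fst p) (fst (snd p)) (snd (snd p)))"
  by (rule comp_rec[OF winC.simps cp_Bw cp_Mw cp_Hw])




lemma vadd_vaddL: "vadd v j = vaddL v j"
  by (simp add: vadd_def vaddL_def case_prod_beta)

lemma length_vaddL[simp]: "length (vaddL a b) = min (length a) (length b)"
  by (simp add: vaddL_def)
lemma length_vsubL[simp]: "length (vsubL a b) = min (length a) (length b)"
  by (simp add: vsubL_def)

lemma vsub_vadd: "length j = length v \<Longrightarrow> vsubL (vaddL j v) j = v"
proof (induction j arbitrary: v)
  case Nil then show ?case by (simp add: vsubL_def vaddL_def)
next
  case (Cons x j) then show ?case by (cases v) (auto simp: vsubL_def vaddL_def)
qed

lemma vsub_vadd2: "length v = length j \<Longrightarrow> vsubL (vaddL v j) j = v"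
proof (induction j arbitrary: v)
  case Nil then show ?case by (simp add: vsubL_def vaddL_def)
next
  case (Cons x j) then show ?case by (cases v) (auto simp: vsubL_def vaddL_def)
qed

lemma vadd_vsub: "length i = length j \<Longrightarrow> vaddL j (vsubL i j) = i"
proof (induction j arbitrary: i)
  case Nil then show ?case by (simp add: vsubL_def vaddL_def)
next
  case (Cons x j) then show ?case by (cases i) (auto simp: vsubL_def vaddL_def)
qed

lemma l1dist_norm: "length i = length j \<Longrightarrow> l1dist i j = int (normL (vsubL i j))"
proof (induction j arbitrary: i)
  case Nil then show ?case by (simp add: vsubL_def l1dist_def normL_def)
next
  case (Cons x j) then show ?case by (cases i) (auto simp: vsubL_def l1dist_def normL_def)
qed

lemma map_of_Some_iff: "distinct (map fst p) \<Longrightarrow> map_of p x = Some a \<longleftrightarrow> (x, a) \<in> set p"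
  by (rule map_of_eq_Some_iff)

lemma appears_iff:
  assumes dp: "distinct (map fst p)" and dq: "distinct (map fst q)"
  shows "appears d (map_of q) (map_of p) \<longleftrightarrow> (\<exists>v. length v = d \<and> (\<forall>ja\<in>set q. (vaddL v (fst ja), snd ja) \<in> set p))"
proof -
  have "(\<forall>j\<in>dom (map_of q). map_of p (vadd v j) = map_of q j) \<longleftrightarrow> (\<forall>ja\<in>set q. (vaddL v (fst ja), snd ja) \<in> set p)" for v
  proof
    assume h: "\<forall>j\<in>dom (map_of q). map_of p (vadd v j) = map_of q j"
    show "\<forall>ja\<in>set q. (vaddL v (fst ja), snd ja) \<in> set p"
    proof
      fix ja assume ja: "ja \<in> set q"
      then have mq: "map_of q (fst ja) = Some (snd ja)" using map_of_Some_iff[OF dq] by (cases ja) auto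
      then have "fst ja \<in> dom (map_of q)" by auto
      then have "map_of p (vadd v (fst ja)) = Some (snd ja)" using h mq by auto
      then show "(vaddL v (fst ja), snd ja) \<in> set p" using map_of_Some_iff[OF dp] by (simp add: vadd_vaddL)
    qed
  next
    assume h: "\<forall>ja\<in>set q. (vaddL v (fst ja), snd ja) \<in> set p"
    show "\<forall>j\<in>dom (map_of q). map_of p (vadd v j) = map_of q j"
    proof
      fix j assume "j \<in> dom (map_of q)"
      then obtain a where a: "map_of q j = Some a" by auto
      then have "(j, a) \<in> set q" using map_of_Some_iff[OF dq] by auto
      then have "(vaddL v j, a) \<in> set p" using h by force
      then show "map_of p (vadd v j) = map_of q j" using a map_of_Some_iff[OF dp] by (simp add: vadd_vaddL)
    qed
  qed
  then show ?thesis unfolding appears_def by auto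
qed

lemma appears_C:
  assumes dp: "distinct (map fst p)" and dq: "distinct (map fst q)"
    and lq: "\<forall>ja\<in>set q. length (fst ja) = d" and lp: "\<forall>ia\<in>set p. length (fst ia) = d"
  shows "appears d (map_of q) (map_of p) \<longleftrightarrow> appearsC q p"
proof (cases q)
  case Nil
  then show ?thesis unfolding appears_iff[OF dp dq] by (auto simp: appearsC_def intro: exI[of _ "replicate d 0"])
next
  case (Cons jb qs)
  have ljb: "length (fst jb) = d" using lq Cons by auto
  show ?thesis unfolding appears_iff[OF dp dq]
  proof
    assume "\<exists>v. length v = d \<and> (\<forall>ja\<in>set q. (vaddL v (fst ja), snd ja) \<in> set p)"
    then obtain v where v: "length v = d" "\<forall>ja\<in>set q. (vaddL v (fst ja), snd ja) \<in> set p" by auto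
    let ?ia = "(vaddL v (fst jb), snd jb)"
    have ia: "?ia \<in> set p" using v Cons by auto
    have "vsubL (fst ?ia) (fst jb) = v" using vsub_vadd2[of v "fst jb"] v ljb by simp
    then show "appearsC q p" unfolding appearsC_def Cons list_ex_iff list_all_iff
      using ia v(2) Cons by (auto intro!: bexI[OF _ ia])
  next
    assume "appearsC q p"
    then obtain ia where ia: "ia \<in> set p" and h: "\<forall>ja\<in>set q. (vaddL (vsubL (fst ia) (fst jb)) (fst ja), snd ja) \<in> set p"
      unfolding appearsC_def Cons list_ex_iff list_all_iff by auto
    have "length (vsubL (fst ia) (fst jb)) = d" using ljb lp ia by simp
    then show "\<exists>v. length v = d \<and> (\<forall>ja\<in>set q. (vaddL v (fst ja), snd ja) \<in> set p)" using h by blast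
  qed
qed

definition Inv :: "nat \<Rightarrow> board list \<Rightarrow> bool" where
  "Inv d bs \<longleftrightarrow> (\<forall>p\<in>set bs. p \<noteq> [] \<and> distinct (map fst p) \<and> (\<forall>ia\<in>set p. length (fst ia) = d))"

definition ValidF :: "nat \<Rightarrow> board list \<Rightarrow> bool" where
  "ValidF d Fs \<longleftrightarrow> (\<forall>q\<in>set Fs. distinct (map fst q) \<and> (\<forall>ja\<in>set q. length (fst ja) = d))"

lemma ended_C:
  assumes I: "Inv d bs" and V: "ValidF d Fs"
  shows "ended d (map_of ` set Fs) (map map_of bs) \<longleftrightarrow> endedC Fs bs"
proof -
  have e1: "ended d (map_of ` set Fs) (map map_of bs) \<longleftrightarrow> (\<exists>p\<in>set bs. \<exists>q\<in>set Fs. appears d (map_of q) (map_of p))"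
    unfolding ended_def by auto
  have e2: "endedC Fs bs \<longleftrightarrow> (\<exists>p\<in>set bs. \<exists>q\<in>set Fs. appearsC q p)"
    unfolding endedC_def list_ex_iff by simp
  have "appears d (map_of q) (map_of p) \<longleftrightarrow> appearsC q p" if "p \<in> set bs" "q \<in> set Fs" for p q
    using that I V unfolding Inv_def ValidF_def by (intro appears_C) auto
  then show ?thesis unfolding e1 e2 by blast
qed

lemma rng_0: "rng 0 = []" by (simp add: rng_def)
lemma rng_Suc: "rng (Suc m) = length (rng m) # rng m" by (simp add: rng_def)

lemma set_rng: "set (rng m) = {..<m}" and length_rng: "length (rng m) = m"
proof -
  have "set (rng m) = {..<m} \<and> length (rng m) = m"
  proof (induction m)
    case 0 then show ?case by (simp add: rng_0)
  next
    case (Suc m) then show ?case by (auto simp: rng_Suc lessThan_Suc)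
  qed
  then show "set (rng m) = {..<m}" "length (rng m) = m" by auto
qed

lemma set_intsR: "set (intsR R) = {z. - int R \<le> z \<and> z \<le> int R}"
proof -
  have "z \<in> (\<lambda>n. int n - int R) ` {..<R + R + 1}" if "- int R \<le> z" "z \<le> int R" for z
    using that by (intro image_eqI[of _ _ "nat (z + int R)"]) auto
  then show ?thesis unfolding intsR_def by (auto simp: set_rng)
qed

lemma set_boxes: "set (boxes R m) = {v. length v = m \<and> (\<forall>z\<in>set v. \<bar>z\<bar> \<le> int R)}"
proof (induction m)
  case 0 then show ?case by (auto simp: boxes_def)
next
  case (Suc m)
  have b: "boxes R (Suc m) = concat (map (\<lambda>v. map (\<lambda>z. z # v) (intsR R)) (boxes R m))"
    by (simp add: boxes_def)
  show ?case
  proof (rule set_eqI)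
    fix w
    show "w \<in> set (boxes R (Suc m)) \<longleftrightarrow> w \<in> {v. length v = Suc m \<and> (\<forall>z\<in>set v. \<bar>z\<bar> \<le> int R)}"
      unfolding b
    proof
      assume "w \<in> set (concat (map (\<lambda>v. map (\<lambda>z. z # v) (intsR R)) (boxes R m)))"
      then obtain v z where "v \<in> set (boxes R m)" "z \<in> set (intsR R)" "w = z # v" by auto
      then show "w \<in> {v. length v = Suc m \<and> (\<forall>z\<in>set v. \<bar>z\<bar> \<le> int R)}"
        using Suc by (auto simp: set_intsR)
    next
      assume w: "w \<in> {v. length v = Suc m \<and> (\<forall>z\<in>set v. \<bar>z\<bar> \<le> int R)}"
      then obtain z v where zv: "w = z # v" by (cases w) auto
      then have "v \<in> set (boxes R m)" "z \<in> set (intsR R)" using w Suc by (auto simp: set_intsR)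
      then show "w \<in> set (concat (map (\<lambda>v. map (\<lambda>z. z # v) (intsR R)) (boxes R m)))"
        using zv by auto
    qed
  qed
qed

lemma normL_bound: "normL v \<le> R \<Longrightarrow> z \<in> set v \<Longrightarrow> \<bar>z\<bar> \<le> int R"
proof -
  assume "normL v \<le> R" "z \<in> set v"
  then have "nat \<bar>z\<bar> \<le> normL v" unfolding normL_def by (intro member_le_sum_list) auto
  with \<open>normL v \<le> R\<close> show ?thesis by linarith
qed

lemma nthb_nth: "k < length bs \<Longrightarrow> nthb bs k = bs ! k"
  by (simp add: nthb_def Cons_nth_drop_Suc[symmetric])

lemma updb_upd: "k < length bs \<Longrightarrow> updb bs k p = bs[k := p]"
  by (simp add: updb_def upd_conv_take_nth_drop)


lemma tile_mem1: "x \<in> set (tileMoves d As R bs) \<longleftrightarrow> (\<exists>k<length bs. \<exists>j\<in>fst ` set (nthb bs k). \<exists>v\<in>set (boxes R d).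
   normL v \<le> R \<and> (\<forall>kb\<in>set (nthb bs k). fst kb \<noteq> vaddL j v) \<and> (\<exists>a\<in>set As. x = updb bs k ((vaddL j v, a) # nthb bs k)))"
  unfolding tileMoves_def set_concat set_map list_all_iff
  by (simp add: set_rng split: if_splits) blast

lemma tile_mem: "x \<in> set (tileMoves d As R bs) \<longleftrightarrow> (\<exists>k j v a. k < length bs \<and> j \<in> fst ` set (bs!k) \<and> length v = d \<and>
   normL v \<le> R \<and> vaddL j v \<notin> fst ` set (bs!k) \<and> a \<in> set As \<and> x = bs[k := (vaddL j v, a) # bs!k])"
  unfolding tile_mem1
proof
  assume "\<exists>k<length bs. \<exists>j\<in>fst ` set (nthb bs k). \<exists>v\<in>set (boxes R d).
   normL v \<le> R \<and> (\<forall>kb\<in>set (nthb bs k). fst kb \<noteq> vaddL j v) \<and> (\<exists>a\<in>set As. x = updb bs k ((vaddL j v, a) # nthb bs k))"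
  then obtain k j v a where "k < length bs" "j \<in> fst ` set (nthb bs k)" "v \<in> set (boxes R d)" "normL v \<le> R"
    "\<forall>kb\<in>set (nthb bs k). fst kb \<noteq> vaddL j v" "a \<in> set As" "x = updb bs k ((vaddL j v, a) # nthb bs k)"
    by blast
  then show "\<exists>k j v a. k < length bs \<and> j \<in> fst ` set (bs!k) \<and> length v = d \<and>
   normL v \<le> R \<and> vaddL j v \<notin> fst ` set (bs!k) \<and> a \<in> set As \<and> x = bs[k := (vaddL j v, a) # bs!k]"
    by (intro exI[of _ k] exI[of _ j] exI[of _ v] exI[of _ a]) (auto simp: nthb_nth updb_upd set_boxes)
next
  assume "\<exists>k j v a. k < length bs \<and> j \<in> fst ` set (bs!k) \<and> length v = d \<and>
   normL v \<le> R \<and> vaddL j v \<notin> fst ` set (bs!k) \<and> a \<in> set As \<and> x = bs[k := (vaddL j v, a) # bs!k]"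
  then obtain k j v a where h: "k < length bs" "j \<in> fst ` set (bs!k)" "length v = d"
   "normL v \<le> R" "vaddL j v \<notin> fst ` set (bs!k)" "a \<in> set As" "x = bs[k := (vaddL j v, a) # bs!k]"
    by blast
  have "v \<in> set (boxes R d)" using h(3,4) by (auto simp: set_boxes dest: normL_bound)
  moreover have "\<forall>kb\<in>set (nthb bs k). fst kb \<noteq> vaddL j v" using h(1,5) by (force simp: nthb_nth)
  ultimately show "\<exists>k<length bs. \<exists>j\<in>fst ` set (nthb bs k). \<exists>v\<in>set (boxes R d).
   normL v \<le> R \<and> (\<forall>kb\<in>set (nthb bs k). fst kb \<noteq> vaddL j v) \<and> (\<exists>a\<in>set As. x = updb bs k ((vaddL j v, a) # nthb bs k))"
    using h nthb_nth[OF h(1)] updb_upd[OF h(1)]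
    by (intro exI[of _ k] conjI bexI[of _ j] bexI[of _ v] bexI[of _ a]) simp_all
qed


lemma geo:
  assumes fin: "finite D" and ne: "D \<noteq> {}" and lD: "\<forall>j\<in>D. length j = d"
  shows "(length i = d \<and> setdist i D \<le> int R) \<longleftrightarrow> (\<exists>j\<in>D. \<exists>v. length v = d \<and> normL v \<le> R \<and> i = vaddL j v)"
proof
  assume h: "length i = d \<and> setdist i D \<le> int R"
  then obtain j where j: "j \<in> D" "l1dist i j \<le> int R"
    unfolding setdist_def using Min_le_iff[of "(\<lambda>j. l1dist i j) ` D" "int R"] fin ne by auto
  have lj: "length j = d" using lD j by auto
  have "int (normL (vsubL i j)) \<le> int R" using j(2) l1dist_norm[of i j] h lj by simp
  then have "normL (vsubL i j) \<le> R" by simp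
  moreover have "i = vaddL j (vsubL i j)" using vadd_vsub[of i j] h lj by simp
  moreover have "length (vsubL i j) = d" using h lj by simp
  ultimately show "\<exists>j\<in>D. \<exists>v. length v = d \<and> normL v \<le> R \<and> i = vaddL j v" using j(1) by blast
next
  assume "\<exists>j\<in>D. \<exists>v. length v = d \<and> normL v \<le> R \<and> i = vaddL j v"
  then obtain j v where j: "j \<in> D" and v: "length v = d" "normL v \<le> R" "i = vaddL j v" by blast
  have lj: "length j = d" using lD j by auto
  have li: "length i = d" using v lj by simp
  have "l1dist i j = int (normL v)" using l1dist_norm[of i j] li lj v(3) vsub_vadd[of j v] v(1) by simp
  then have "l1dist i j \<le> int R" using v(2) by simp
  then have "setdist i D \<le> int R"
    unfolding setdist_def using Min_le_iff[of "(\<lambda>j. l1dist i j) ` D" "int R"] fin ne j(1) by auto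
  then show "length i = d \<and> setdist i D \<le> int R" using li by simp
qed

lemma moves_C:
  assumes I: "Inv d bs"
  shows "moves d (set As) T t (map map_of bs) = map map_of ` set (movesC d As T t bs)"
proof -
  let ?R = "(2::nat) ^ (T - t)"
  let ?bsM = "map map_of bs"
  have tile: "{?bsM[k := (?bsM ! k)(i \<mapsto> a)] | k i a. k < length ?bsM \<and> length i = d \<and> i \<notin> dom (?bsM ! k)
           \<and> a \<in> set As \<and> setdist i (dom (?bsM ! k)) \<le> 2 ^ (T - t)}
      = map map_of ` set (tileMoves d As ?R bs)" (is "?L = ?Rt")
  proof (rule set_eqI)
    fix x
    have e: "(\<exists>k i a. x = ?bsM[k := (?bsM ! k)(i \<mapsto> a)] \<and> k < length ?bsM \<and> length i = d \<and> i \<notin> dom (?bsM ! k)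
           \<and> a \<in> set As \<and> setdist i (dom (?bsM ! k)) \<le> 2 ^ (T - t))
       \<longleftrightarrow> (\<exists>k j v a. k < length bs \<and> j \<in> fst ` set (bs!k) \<and> length v = d \<and>
           normL v \<le> ?R \<and> vaddL j v \<notin> fst ` set (bs!k) \<and> a \<in> set As \<and> x = map map_of (bs[k := (vaddL j v, a) # bs!k]))"
    proof
      assume "\<exists>k i a. x = ?bsM[k := (?bsM ! k)(i \<mapsto> a)] \<and> k < length ?bsM \<and> length i = d \<and> i \<notin> dom (?bsM ! k)
           \<and> a \<in> set As \<and> setdist i (dom (?bsM ! k)) \<le> 2 ^ (T - t)"
      then obtain k i a where h0: "x = ?bsM[k := (?bsM ! k)(i \<mapsto> a)]" "k < length ?bsM" "length i = d" "i \<notin> dom (?bsM ! k)"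
        "a \<in> set As" "setdist i (dom (?bsM ! k)) \<le> 2 ^ (T - t)" by blast
      then have h: "x = ?bsM[k := (?bsM ! k)(i \<mapsto> a)]" "k < length bs" "length i = d" "i \<notin> dom (?bsM ! k)"
        "a \<in> set As" "setdist i (dom (?bsM ! k)) \<le> 2 ^ (T - t)" by simp_all
      have bk: "bs ! k \<in> set bs" using h(2) by simp
      have dom: "dom (?bsM ! k) = fst ` set (bs ! k)" using h(2) by (simp add: dom_map_of_conv_image_fst)
      have "length i = d \<and> setdist i (fst ` set (bs ! k)) \<le> int ?R" using h(3,6) dom by simp
      then obtain j v where jv: "j \<in> fst ` set (bs!k)" "length v = d" "normL v \<le> ?R" "i = vaddL j v"
        using geo[of "fst ` set (bs!k)" d i ?R] I bk unfolding Inv_def by auto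
      have "x = map map_of (bs[k := (vaddL j v, a) # bs!k])" using h(1,2) jv(4) by (simp add: map_update)
      then show "\<exists>k j v a. k < length bs \<and> j \<in> fst ` set (bs!k) \<and> length v = d \<and>
           normL v \<le> ?R \<and> vaddL j v \<notin> fst ` set (bs!k) \<and> a \<in> set As \<and> x = map map_of (bs[k := (vaddL j v, a) # bs!k])"
        using h jv dom by blast
    next
      assume "\<exists>k j v a. k < length bs \<and> j \<in> fst ` set (bs!k) \<and> length v = d \<and>
           normL v \<le> ?R \<and> vaddL j v \<notin> fst ` set (bs!k) \<and> a \<in> set As \<and> x = map map_of (bs[k := (vaddL j v, a) # bs!k])"
      then obtain k j v a where h: "k < length bs" "j \<in> fst ` set (bs!k)" "length v = d"
           "normL v \<le> ?R" "vaddL j v \<notin> fst ` set (bs!k)" "a \<in> set As" "x = map map_of (bs[k := (vaddL j v, a) # bs!k])"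
        by blast
      have bk: "bs ! k \<in> set bs" using h(1) by simp
      have dom: "dom (?bsM ! k) = fst ` set (bs ! k)" using h(1) by (simp add: dom_map_of_conv_image_fst)
      have "length (vaddL j v) = d \<and> setdist (vaddL j v) (fst ` set (bs ! k)) \<le> int ?R"
        using geo[of "fst ` set (bs!k)" d "vaddL j v" ?R] I bk h unfolding Inv_def by auto
      moreover have "x = ?bsM[k := (?bsM ! k)(vaddL j v \<mapsto> a)]" using h(1,7) by (simp add: map_update)
      ultimately show "\<exists>k i a. x = ?bsM[k := (?bsM ! k)(i \<mapsto> a)] \<and> k < length ?bsM \<and> length i = d \<and> i \<notin> dom (?bsM ! k)
           \<and> a \<in> set As \<and> setdist i (dom (?bsM ! k)) \<le> 2 ^ (T - t)"
        using h dom by (intro exI[of _ k] exI[of _ "vaddL j v"] exI[of _ a]) simp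
    qed
    show "x \<in> ?L \<longleftrightarrow> x \<in> ?Rt"
      unfolding tile_mem image_iff Bex_def mem_Collect_eq e by blast
  qed
  have new: "{?bsM @ [[replicate d 0 \<mapsto> a]] | a. a \<in> set As} = map map_of ` (\<lambda>a. bs @ [[(replicate d 0, a)]]) ` set As"
  proof (rule set_eqI)
    fix x
    have "map map_of (bs @ [[(replicate d 0, a)]]) = ?bsM @ [[replicate d 0 \<mapsto> a]]" for a by simp
    then show "x \<in> {?bsM @ [[replicate d 0 \<mapsto> a]] | a. a \<in> set As} \<longleftrightarrow> x \<in> map map_of ` (\<lambda>a. bs @ [[(replicate d 0, a)]]) ` set As"
      unfolding image_image image_iff by auto
  qed
  show ?thesis unfolding moves_def movesC_def tile new by auto
qed

lemma Inv_moves: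
  assumes I: "Inv d bs" and b: "b \<in> set (movesC d As T t bs)"
  shows "Inv d b"
proof -
  have "Inv d (bs[k := (vaddL j v, a) # bs!k])"
    if "k < length bs" "j \<in> fst ` set (bs!k)" "length v = d" "vaddL j v \<notin> fst ` set (bs!k)" for k j v a
  proof -
    have bk: "bs ! k \<in> set bs" using that(1) by simp
    then have "length j = d" using that(2) I unfolding Inv_def by auto
    then have "(vaddL j v, a) # bs!k \<noteq> [] \<and> distinct (map fst ((vaddL j v, a) # bs!k)) \<and> (\<forall>ia\<in>set ((vaddL j v, a) # bs!k). length (fst ia) = d)"
      using that I bk unfolding Inv_def by auto
    then show ?thesis using I set_update_subset_insert[of bs k] unfolding Inv_def by blast
  qed
  moreover have "Inv d (bs @ [[(replicate d 0, a)]])" for a using I unfolding Inv_def by auto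
  moreover note I
  moreover have "b = bs \<or> b \<in> set (tileMoves d As (2 ^ (T - t)) bs) \<or> (\<exists>a. b = bs @ [[(replicate d 0, a)]])"
    using b unfolding movesC_def by auto
  ultimately show ?thesis unfolding tile_mem by blast
qed


lemma win_C:
  assumes V: "ValidF d Fs"
  shows "Inv d bs \<Longrightarrow> win d (set As) (map_of ` set Fs) T r t (map map_of bs) = winC (d, As, Fs, T) r (t, bs)"
proof (induction r arbitrary: t bs)
  case 0 then show ?case by (simp add: Bw_def ended_C[OF _ V])
next
  case (Suc r)
  have IH: "\<forall>b\<in>set (movesC d As T t bs). win d (set As) (map_of ` set Fs) T r (Suc t) (map map_of b) = winC (d, As, Fs, T) r (Suc t, b)"
    using Suc.IH Inv_moves[OF Suc.prems] by blast
  have ex: "(\<exists>bs'\<in>moves d (set As) T t (map map_of bs). win d (set As) (map_of ` set Fs) T r (Suc t) bs')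
     \<longleftrightarrow> (\<exists>b\<in>set (movesC d As T t bs). winC (d, As, Fs, T) r (Suc t, b))"
    unfolding moves_C[OF Suc.prems] using IH by auto
  have al: "(\<forall>bs'\<in>moves d (set As) T t (map map_of bs). win d (set As) (map_of ` set Fs) T r (Suc t) bs')
     \<longleftrightarrow> (\<forall>b\<in>set (movesC d As T t bs). winC (d, As, Fs, T) r (Suc t, b))"
    unfolding moves_C[OF Suc.prems] using IH by auto
  show ?case using ex al by (simp add: Hw_def Mw_def ended_C[OF Suc.prems V] list_ex_iff list_all_iff)
qed

lemma A_wins_C: "valid_instance d As Fs \<Longrightarrow> A_wins d (set As) (map_of ` set Fs) T = winC (d, As, Fs, T) T (1, [])"
proof -
  assume "valid_instance d As Fs"
  then have V: "ValidF d Fs" unfolding valid_instance_def ValidF_def by fastforce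
  show ?thesis unfolding A_wins_def using win_C[OF V, of "[]" As T T 1] by (simp add: Inv_def)
qed




lemma surj_enc_nat: "surj (enc :: nat \<Rightarrow> nat)"
  by (metis enc_nat surjI)

lemma surj_enc_int: "surj (enc :: int \<Rightarrow> nat)"
  unfolding enc_int_def by (rule surj_int_encode)

lemma surj_enc_prod:
  assumes "surj (enc :: 'a::enc \<Rightarrow> nat)" "surj (enc :: 'b::enc \<Rightarrow> nat)"
  shows "surj (enc :: 'a \<times> 'b \<Rightarrow> nat)"
proof (rule surjI)
  fix n :: nat
  show "enc (inv (enc :: 'a \<Rightarrow> nat) (fst (prod_decode n)), inv (enc :: 'b \<Rightarrow> nat) (snd (prod_decode n))) = n"
    using prod_decode_inverse[of n] assms by (simp add: enc_pair surj_f_inv_f)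
qed

lemma surj_enc_list:
  assumes "surj (enc :: 'a::enc \<Rightarrow> nat)"
  shows "surj (enc :: 'a list \<Rightarrow> nat)"
proof (rule surjI)
  fix n :: nat
  have "map enc (map (inv (enc :: 'a \<Rightarrow> nat)) (list_decode n)) = list_decode n"
    using assms by (simp add: surj_f_inv_f map_idI)
  then show "enc (map (inv (enc :: 'a \<Rightarrow> nat)) (list_decode n)) = n"
    unfolding enc_list_def by simp
qed

lemma surj_natlist: "surj (enc :: nat list \<Rightarrow> nat)"
  by (rule surj_enc_list[OF surj_enc_nat])

lemma surj_boards: "surj (enc :: board list \<Rightarrow> nat)"
  by (intro surj_enc_list surj_enc_prod surj_enc_int surj_enc_nat)

definition nth0 :: "nat list \<Rightarrow> nat \<Rightarrow> nat" where
  "nth0 l i = (case drop i l of [] \<Rightarrow> 0 | y # _ \<Rightarrow> y)"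

definition Gdec :: "nat list \<Rightarrow> nat" where
  "Gdec l = (if winC (nth0 l 0, inv enc (nth0 l 1), inv enc (nth0 l 2), nth0 l 3) (nth0 l 3) (1, []) then 1 else 0)"

lemma cp_Gdec: "cp Gdec"
  unfolding Gdec_def nth0_def
  by (intro ci comp_app3[OF cp_winC] comp_dec[OF surj_natlist] comp_dec[OF surj_boards])

lemma enc_point_eq: "enc (i :: int list) = enc_point i"
  by (simp add: enc_list_def enc_point_def enc_int_def)

lemma enc_board: "enc (ps :: board) = enc_pattern ps"
proof -
  have "map enc ps = map (\<lambda>(i, a). prod_encode (enc_point i, a)) ps"
    by (rule map_cong) (auto simp: enc_pair enc_point_eq)
  then show ?thesis by (simp only: enc_list_def enc_pattern_def)
qed

lemma map_enc_nat: "map (enc :: nat \<Rightarrow> nat) xs = xs" by (induction xs) auto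

lemma enc_instance_enc: "enc_instance d As Fs T = enc ([d, enc As, enc Fs, T] :: nat list)"
proof -
  have h1: "map enc Fs = map enc_pattern Fs" by (rule map_cong) (simp_all add: enc_board)
  have h2: "enc Fs = list_encode (map enc_pattern Fs)" by (simp only: enc_list_def h1)
  have h3: "enc As = list_encode As" by (simp only: enc_list_def map_enc_nat)
  have h4: "enc (xs :: nat list) = list_encode xs" for xs
    by (simp only: enc_list_def map_enc_nat)
  show ?thesis unfolding enc_instance_def h4 h2 ..
qed

theorem lemma2:
  shows "\<exists>f. (\<forall>n. \<exists>y. evalr f [n] y) \<and>
           (\<forall>d As Fs T. valid_instance d As Fs \<longrightarrow>
             (\<forall>y. evalr f [enc_instance d As Fs T] y \<longleftrightarrow>
                    y = (if A_wins d (set As) (map_of ` set Fs) T then 1 else 0)))"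
proof -
  obtain F where F: "cnat F" "\<forall>x. F (enc x) = enc (Gdec x)" using cp_Gdec unfolding cp_def by blast
  obtain r where r: "RK 1 r (\<lambda>xs. F (xs!0))" using F(1) unfolding cnat_def by blast
  have ev: "evalr r [n] (F n)" for n using r unfolding RK_def by (metis length_Cons list.size(3) nth_Cons_0 One_nat_def)
  have "\<forall>y. evalr r [enc_instance d As Fs T] y \<longleftrightarrow> y = (if A_wins d (set As) (map_of ` set Fs) T then 1 else 0)"
    if v: "valid_instance d As Fs" for d As Fs T
  proof -
    have "F (enc_instance d As Fs T) = Gdec [d, enc As, enc Fs, T]"
      unfolding enc_instance_enc using F(2) by simp
    also have "\<dots> = (if A_wins d (set As) (map_of ` set Fs) T then 1 else 0)"
      unfolding Gdec_def nth0_def A_wins_C[OF v] by (simp add: inv_f_f[OF inj_enc])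
    finally have Fv: "F (enc_instance d As Fs T) = (if A_wins d (set As) (map_of ` set Fs) T then 1 else 0)" .
    show ?thesis using ev[of "enc_instance d As Fs T"] evalr_det Fv by metis
  qed
  then show ?thesis using ev by blast
qed


end
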